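(* Let $p$ be an odd prime and $k\in\mathbb{N}$. Then $\Delta_D(H_3(\mathbb{Z}/p^k\mathbb{Z}))^*$ is disconnected if and only if $k=1$.
   Context: $H_3(\mathbb{Z}/p^k\mathbb{Z})=\langle y_1,y_2,w\mid [y_1,y_2]=w,\ y_1^{p^k}=y_2^{p^k}=w^{p^k}=[y_1,w]=[y_2,w]=e\rangle$ for an odd prime $p$. The deep commuting graph $\Delta_D(G)$ has vertex set $G$, distinct vertices adjacent iff their preimages commute in a Schur cover $\tilde G$ of $G$ (a central extension $\{e\}\to M(G)\to\tilde G\to G\to\{e\}$ with kernel contained in $Z(\tilde G)\cap[\tilde G,\tilde G]$, of maximal order; $M(G)$ the Schur multiplier). A vertex is dominant if adjacent to every other vertex; the reduced graph $\Gamma^*$ is the subgraph induced by the non-dominant vertices. *)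

theory Defs
  imports "HOL-Computational_Algebra.Primes" "HOL-Algebra.Generated_Groups"
begin

definition group_center :: "('a, 'b) monoid_scheme \<Rightarrow> 'a set" where
  "group_center T = {z \<in> carrier T. \<forall>x \<in> carrier T. z \<otimes>\<^bsub>T\<^esub> x = x \<otimes>\<^bsub>T\<^esub> z}"

definition stem_extension ::
  "('c, 'd) monoid_scheme \<Rightarrow> ('a, 'b) monoid_scheme \<Rightarrow> ('c \<Rightarrow> 'a) \<Rightarrow> bool" where
  "stem_extension T G \<pi> \<longleftrightarrow> group T \<and> \<pi> \<in> epi T G \<and>
     kernel T G \<pi> \<subseteq> group_center T \<inter> derived T (carrier T)"

(* The competing extensions range over groups with carrier in nat; every finite group
   has an isomorphic copy of that form, so this is the maximum over all finite stem extensions. *)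
definition schur_cover ::
  "('c, 'd) monoid_scheme \<Rightarrow> ('a, 'b) monoid_scheme \<Rightarrow> ('c \<Rightarrow> 'a) \<Rightarrow> bool" where
  "schur_cover T G \<pi> \<longleftrightarrow> stem_extension T G \<pi> \<and> finite (carrier T) \<and>
     (\<forall>(S :: nat monoid) \<sigma>. stem_extension S G \<sigma> \<and> finite (carrier S) \<longrightarrow>
        card (kernel S G \<sigma>) \<le> card (kernel T G \<pi>))"

(* Deep commuting graph adjacency: distinct x, y whose preimages commute in a Schur cover.
   (This is independent of the choice of Schur cover; we take the cover to range over
   groups with carrier in nat and require commuting in every such cover.) *)
definition deep_adj :: "('a, 'b) monoid_scheme \<Rightarrow> 'a \<Rightarrow> 'a \<Rightarrow> bool" where
  "deep_adj G x y \<longleftrightarrow> x \<in> carrier G \<and> y \<in> carrier G \<and> x \<noteq> y \<and>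
     (\<forall>(T :: nat monoid) \<pi>. schur_cover T G \<pi> \<longrightarrow>
        (\<forall>a \<in> carrier T. \<forall>b \<in> carrier T. \<pi> a = x \<and> \<pi> b = y \<longrightarrow>
            a \<otimes>\<^bsub>T\<^esub> b = b \<otimes>\<^bsub>T\<^esub> a))"

definition dominant_vertices :: "'a set \<Rightarrow> ('a \<Rightarrow> 'a \<Rightarrow> bool) \<Rightarrow> 'a set" where
  "dominant_vertices V E = {v \<in> V. \<forall>w \<in> V. w \<noteq> v \<longrightarrow> E v w}"

definition reduced_vertices :: "'a set \<Rightarrow> ('a \<Rightarrow> 'a \<Rightarrow> bool) \<Rightarrow> 'a set" where
  "reduced_vertices V E = V - dominant_vertices V E"

definition graph_connected :: "'a set \<Rightarrow> ('a \<Rightarrow> 'a \<Rightarrow> bool) \<Rightarrow> bool" where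
  "graph_connected V E \<longleftrightarrow> V \<noteq> {} \<and>
     (\<forall>x \<in> V. \<forall>y \<in> V. (\<lambda>u v. u \<in> V \<and> v \<in> V \<and> E u v)\<^sup>*\<^sup>* x y)"

(* Heisenberg group H_3(Z/nZ) as upper unitriangular 3x3 matrices (a,b,c) ~ [[1,a,c],[0,1,b],[0,0,1]] *)
definition heisenberg :: "int \<Rightarrow> (int \<times> int \<times> int) monoid" where
  "heisenberg n = \<lparr> carrier = {0..<n} \<times> {0..<n} \<times> {0..<n},
      monoid.mult = (\<lambda>(a, b, c) (a', b', c'). ((a + a') mod n, (b + b') mod n, (c + c' + a * b') mod n)),
      monoid.one = (0, 0, 0) \<rparr>"

end

theory Submission
  imports Defs "HOL-Library.Countable"
begin



lemma modeq_intro: "(\<exists>k. x = y + N*k) \<Longrightarrow> (x::int) mod N = y mod N" by auto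
lemma modeq0_intro: "(\<exists>k. x = N*k) \<Longrightarrow> (x::int) mod N = 0" by auto
lemma mod_add_self_zero:
  assumes "0 \<le> (a::int)" "a < N" "0 \<le> c" "c < N" "(a + c) mod N = c"
  shows "a = 0"
proof -
  have "(a + c) mod N = (0 + c) mod N" using assms by simp
  then have "N dvd a" by (simp add: mod_eq_dvd_iff)
  then show ?thesis using assms zdvd_imp_le[of N a] by (cases "a = 0") auto
qed
lemma mod_as: "(x::int) mod N = x + N * (- (x div N))"
  by (simp add: minus_div_mult_eq_mod[symmetric] algebra_simps)

lemma heis_simps:
  "carrier (heisenberg n) = {0..<n} \<times> {0..<n} \<times> {0..<n}"
  "\<one>\<^bsub>heisenberg n\<^esub> = (0,0,0)"
  "(a,b,c) \<otimes>\<^bsub>heisenberg n\<^esub> (a',b',c') = ((a + a') mod n, (b + b') mod n, (c + c' + a * b') mod n)"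
  by (simp_all add: heisenberg_def)

lemma heis_group:
  assumes N1: "(N::int) > 1"
  shows "group (heisenberg N)"
proof (rule groupI)
  fix x y assume "x \<in> carrier (heisenberg N)" "y \<in> carrier (heisenberg N)"
  then show "x \<otimes>\<^bsub>heisenberg N\<^esub> y \<in> carrier (heisenberg N)"
    using N1 by (cases x, cases y) (auto simp: heis_simps)
next
  show "\<one>\<^bsub>heisenberg N\<^esub> \<in> carrier (heisenberg N)" using N1 by (simp add: heis_simps)
next
  fix x y z assume "x \<in> carrier (heisenberg N)" "y \<in> carrier (heisenberg N)" "z \<in> carrier (heisenberg N)"
  obtain a b c where x: "x = (a,b,c)" by (cases x) auto
  obtain a' b' c' where y: "y = (a',b',c')" by (cases y) auto
  obtain a'' b'' c'' where z: "z = (a'',b'',c'')" by (cases z) auto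
  have 1: "((a + a') mod N + a'') mod N = (a + (a' + a'') mod N) mod N" by (simp add: mod_simps add.assoc)
  have 2: "((b + b') mod N + b'') mod N = (b + (b' + b'') mod N) mod N" by (simp add: mod_simps add.assoc)
  have 3: "((c + c' + a * b') mod N + c'' + (a + a') mod N * b'') mod N
         = (c + (c' + c'' + a' * b'') mod N + a * ((b' + b'') mod N)) mod N"
    apply (rule modeq_intro) apply (simp only: mod_as[of _ N]) by algebra
  show "x \<otimes>\<^bsub>heisenberg N\<^esub> y \<otimes>\<^bsub>heisenberg N\<^esub> z = x \<otimes>\<^bsub>heisenberg N\<^esub> (y \<otimes>\<^bsub>heisenberg N\<^esub> z)"
    unfolding x y z heis_simps using 1 2 3 by simp
next
  fix x assume "x \<in> carrier (heisenberg N)"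
  then show "\<one>\<^bsub>heisenberg N\<^esub> \<otimes>\<^bsub>heisenberg N\<^esub> x = x"
    by (cases x) (auto simp: heis_simps)
next
  fix x assume xc: "x \<in> carrier (heisenberg N)"
  obtain a b c where x: "x = (a,b,c)" by (cases x) auto
  let ?y = "((- a) mod N, (- b) mod N, (a * b - c) mod N)"
  have "?y \<in> carrier (heisenberg N)" using N1 by (simp add: heis_simps)
  moreover have "?y \<otimes>\<^bsub>heisenberg N\<^esub> x = \<one>\<^bsub>heisenberg N\<^esub>"
    unfolding x heis_simps apply (simp add: mod_simps) 
    apply (rule modeq0_intro) apply (simp only: mod_as[of _ N]) by algebra
  ultimately show "\<exists>y\<in>carrier (heisenberg N). y \<otimes>\<^bsub>heisenberg N\<^esub> x = \<one>\<^bsub>heisenberg N\<^esub>" by blast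
qed

lemma heis_inv:
  assumes N1: "(N::int) > 1" and x: "(a,b,c) \<in> carrier (heisenberg N)"
  shows "inv\<^bsub>heisenberg N\<^esub> (a,b,c) = ((- a) mod N, (- b) mod N, (a * b - c) mod N)"
proof -
  interpret G: group "heisenberg N" using heis_group[OF N1] .
  have yc: "((- a) mod N, (- b) mod N, (a * b - c) mod N) \<in> carrier (heisenberg N)" using N1 by (simp add: heis_simps)
  have "((- a) mod N, (- b) mod N, (a * b - c) mod N) \<otimes>\<^bsub>heisenberg N\<^esub> (a,b,c) = \<one>\<^bsub>heisenberg N\<^esub>"
    unfolding heis_simps apply (simp add: mod_simps)
    apply (rule modeq0_intro) apply (simp only: mod_as[of _ N]) by algebra
  then show ?thesis using G.inv_equality[OF _ x yc] by simp
qed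

lemma heis_pow12:
  assumes N1: "(N::int) > 1" and x: "x \<in> carrier (heisenberg N)"
  shows "fst (x [^]\<^bsub>heisenberg N\<^esub> (n::nat)) = (int n * fst x) mod N \<and>
         fst (snd (x [^]\<^bsub>heisenberg N\<^esub> n)) = (int n * fst (snd x)) mod N"
proof (induction n)
  case 0
  then show ?case by (simp add: heis_simps)
next
  case (Suc n)
  obtain a b c where xe: "x = (a,b,c)" by (cases x) auto
  obtain a' b' c' where pe: "x [^]\<^bsub>heisenberg N\<^esub> n = (a',b',c')" by (cases "x [^]\<^bsub>heisenberg N\<^esub> n") auto
  have "x [^]\<^bsub>heisenberg N\<^esub> (Suc n) = (a',b',c') \<otimes>\<^bsub>heisenberg N\<^esub> (a,b,c)"
    using pe xe by simp
  then show ?case using Suc pe xe by (simp add: heis_simps mod_simps algebra_simps)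
qed

lemma heis_pow3:
  assumes N1: "(N::int) > 1"
  shows "(0,0,1) [^]\<^bsub>heisenberg N\<^esub> (n::nat) = (0,0,int n mod N)"
proof (induction n)
  case 0
  then show ?case by (simp add: heis_simps)
next
  case (Suc n)
  then show ?case by (simp add: heis_simps mod_simps algebra_simps)
qed

lemma heis_pow1:
  shows "(1,0,0) [^]\<^bsub>heisenberg N\<^esub> (n::nat) = (int n mod N,0,0)"
proof (induction n)
  case 0
  then show ?case by (simp add: heis_simps)
next
  case (Suc n)
  then show ?case by (simp add: heis_simps mod_simps algebra_simps)
qed

lemma heis_pow2:
  shows "(0,1,0) [^]\<^bsub>heisenberg N\<^esub> (n::nat) = (0,int n mod N,0)"
proof (induction n)
  case 0
  then show ?case by (simp add: heis_simps)
next
  case (Suc n)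
  then show ?case by (simp add: heis_simps mod_simps algebra_simps)
qed

lemma heis_central:
  assumes "y \<in> carrier (heisenberg N)"
  shows "(0,0,c) \<otimes>\<^bsub>heisenberg N\<^esub> y = y \<otimes>\<^bsub>heisenberg N\<^esub> (0,0,c)"
  using assms by (cases y) (auto simp: heis_simps algebra_simps)

lemma heis_noncomm1:
  assumes N1: "(N::int) > 1" and "(a,b,c) \<in> carrier (heisenberg N)"
    and "(a,b,c) \<otimes>\<^bsub>heisenberg N\<^esub> (1,0,0) = (1,0,0) \<otimes>\<^bsub>heisenberg N\<^esub> (a,b,c)"
  shows "b = 0"
  using assms mod_add_self_zero[of b N c] by (auto simp: heis_simps add.commute)

lemma heis_noncomm2:
  assumes N1: "(N::int) > 1" and "(a,b,c) \<in> carrier (heisenberg N)"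
    and "(a,b,c) \<otimes>\<^bsub>heisenberg N\<^esub> (0,1,0) = (0,1,0) \<otimes>\<^bsub>heisenberg N\<^esub> (a,b,c)"
  shows "a = 0"
  using assms mod_add_self_zero[of a N c] by (auto simp: heis_simps add.commute)

lemma heis_comm12:
  assumes N1: "(N::int) > 1"
  shows "(1,0,0) \<otimes>\<^bsub>heisenberg N\<^esub> (0,1,0) \<otimes>\<^bsub>heisenberg N\<^esub> inv\<^bsub>heisenberg N\<^esub> (1,0,0)
           \<otimes>\<^bsub>heisenberg N\<^esub> inv\<^bsub>heisenberg N\<^esub> (0,1,0) = (0,0,1)"
proof -
  have c1: "(1,0,0) \<in> carrier (heisenberg N)" "(0,1,0) \<in> carrier (heisenberg N)" using N1 by (auto simp: heis_simps)
  show ?thesis using N1 heis_inv[OF N1 c1(1)] heis_inv[OF N1 c1(2)]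
    by (simp add: heis_simps mod_simps zmod_zminus1_eq_if)
qed




definition gcomm :: "('a, 'b) monoid_scheme \<Rightarrow> 'a \<Rightarrow> 'a \<Rightarrow> 'a" where
  "gcomm G x y = x \<otimes>\<^bsub>G\<^esub> y \<otimes>\<^bsub>G\<^esub> inv\<^bsub>G\<^esub> x \<otimes>\<^bsub>G\<^esub> inv\<^bsub>G\<^esub> y"

context group
begin

lemma cancel1: "x \<in> carrier G \<Longrightarrow> y \<in> carrier G \<Longrightarrow> x \<otimes> (inv x \<otimes> y) = y"
  by (simp add: m_assoc[symmetric])
lemma cancel2: "x \<in> carrier G \<Longrightarrow> y \<in> carrier G \<Longrightarrow> inv x \<otimes> (x \<otimes> y) = y"
  by (simp add: m_assoc[symmetric])

lemma gcomm_closed[simp]: "x \<in> carrier G \<Longrightarrow> y \<in> carrier G \<Longrightarrow> gcomm G x y \<in> carrier G"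
  by (simp add: gcomm_def)

lemma gcomm_one_iff: "x \<in> carrier G \<Longrightarrow> y \<in> carrier G \<Longrightarrow> gcomm G x y = \<one> \<longleftrightarrow> x \<otimes> y = y \<otimes> x"
proof -
  assume x: "x \<in> carrier G" and y: "y \<in> carrier G"
  have "gcomm G x y = (x \<otimes> y) \<otimes> inv (y \<otimes> x)"
    using x y by (simp add: gcomm_def inv_mult_group m_assoc)
  then show ?thesis using x y
    by (metis inv_closed inv_comm inv_inv m_closed r_inv local.inv_equality)
qed

lemma gcomm_inv: "x \<in> carrier G \<Longrightarrow> y \<in> carrier G \<Longrightarrow> inv (gcomm G x y) = gcomm G y x"
  by (simp add: gcomm_def inv_mult_group m_assoc)

lemma gcomm_mult_left:
  "x1 \<in> carrier G \<Longrightarrow> x2 \<in> carrier G \<Longrightarrow> y \<in> carrier G \<Longrightarrow>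
   gcomm G (x1 \<otimes> x2) y = x1 \<otimes> gcomm G x2 y \<otimes> inv x1 \<otimes> gcomm G x1 y"
  by (simp add: gcomm_def inv_mult_group m_assoc cancel1 cancel2)

lemma gcomm_mult_right:
  "x \<in> carrier G \<Longrightarrow> y1 \<in> carrier G \<Longrightarrow> y2 \<in> carrier G \<Longrightarrow>
   gcomm G x (y1 \<otimes> y2) = gcomm G x y1 \<otimes> (y1 \<otimes> gcomm G x y2 \<otimes> inv y1)"
  by (simp add: gcomm_def inv_mult_group m_assoc cancel1 cancel2)

lemma conj_central:
  "g \<in> carrier G \<Longrightarrow> c \<in> carrier G \<Longrightarrow> c \<otimes> g = g \<otimes> c \<Longrightarrow> g \<otimes> c \<otimes> inv g = c"
  by (metis m_assoc inv_closed r_inv r_one)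

lemma conj_mult:
  "g \<in> carrier G \<Longrightarrow> x \<in> carrier G \<Longrightarrow> y \<in> carrier G \<Longrightarrow>
   g \<otimes> (x \<otimes> y) \<otimes> inv g = (g \<otimes> x \<otimes> inv g) \<otimes> (g \<otimes> y \<otimes> inv g)"
  by (simp add: m_assoc cancel1 cancel2)

lemma conj_pow:
  "g \<in> carrier G \<Longrightarrow> x \<in> carrier G \<Longrightarrow> g \<otimes> (x [^] (n::nat)) \<otimes> inv g = (g \<otimes> x \<otimes> inv g) [^] n"
proof (induction n)
  case 0 then show ?case by simp
next
  case (Suc n)
  then show ?case using conj_mult[of g "x [^] n" x] by simp
qed

lemma conj_as_gcomm:
  "g \<in> carrier G \<Longrightarrow> x \<in> carrier G \<Longrightarrow> g \<otimes> x \<otimes> inv g = gcomm G g x \<otimes> x"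
  by (simp add: gcomm_def m_assoc)

lemma gcomm_self_pow: "x \<in> carrier G \<Longrightarrow> gcomm G x (x [^] (n::nat)) = \<one>"
  by (simp add: gcomm_one_iff nat_pow_comm[of x 1 n, simplified])

end

lemma stem_group: "stem_extension T G \<pi> \<Longrightarrow> group T"
  by (simp add: stem_extension_def)

locale heis_stem = S?: group S for S (structure) +
  fixes pi :: "'c \<Rightarrow> int \<times> int \<times> int" and N :: int
  assumes N1: "N > 1"
    and pi_hom: "pi \<in> hom S (heisenberg N)"
    and pi_surj: "pi ` carrier S = carrier (heisenberg N)"
    and ker_center: "kernel S (heisenberg N) pi \<subseteq> group_center S"
    and ker_derived: "kernel S (heisenberg N) pi \<subseteq> derived S (carrier S)"

lemma heis_stemI:
  assumes "stem_extension S (heisenberg N) pi" "N > 1"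
  shows "heis_stem S pi N"
  using assms unfolding stem_extension_def heis_stem_def heis_stem_axioms_def epi_def by auto

context heis_stem
begin

abbreviation "H \<equiv> heisenberg N"
abbreviation "K \<equiv> kernel S H pi"

lemma HG: "group H" using heis_group[OF N1] .

sublocale ph: group_hom S H pi
  using HG pi_hom by (simp add: group_hom_def group_hom_axioms_def S.group_axioms)

lemma K_iff: "x \<in> K \<longleftrightarrow> x \<in> carrier S \<and> pi x = (0,0,0)"
  by (simp add: kernel_def heis_simps)

lemma K_carrier: "x \<in> K \<Longrightarrow> x \<in> carrier S" by (simp add: K_iff)

lemma K_comm: "k \<in> K \<Longrightarrow> y \<in> carrier S \<Longrightarrow> k \<otimes> y = y \<otimes> k"
  using ker_center by (auto simp: group_center_def)

lemma K_subgroup: "subgroup K S" using ph.subgroup_kernel .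

lemma K_mult: "a \<in> K \<Longrightarrow> b \<in> K \<Longrightarrow> a \<otimes> b \<in> K"
  by (rule subgroup.m_closed[OF K_subgroup])
lemma K_inv: "a \<in> K \<Longrightarrow> inv a \<in> K"
  by (rule subgroup.m_inv_closed[OF K_subgroup])
lemma K_one: "\<one> \<in> K"
  by (rule subgroup.one_closed[OF K_subgroup])
lemma K_pow: "a \<in> K \<Longrightarrow> a [^] (n::nat) \<in> K"
  by (induction n) (auto simp: K_one K_mult)

lemma lift_decomp:
  assumes y: "y \<in> carrier S" and s: "s \<in> carrier S" and e: "pi s = pi y"
  shows "\<exists>k\<in>K. y = s \<otimes> k"
proof -
  have "pi (inv s \<otimes> y) = inv\<^bsub>H\<^esub> (pi s) \<otimes>\<^bsub>H\<^esub> pi y"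
    using y s by simp
  also have "\<dots> = \<one>\<^bsub>H\<^esub>" using e group.l_inv[OF HG, of "pi y"] y by simp
  finally have "inv s \<otimes> y \<in> K" using y s by (simp add: kernel_def)
  moreover have "y = s \<otimes> (inv s \<otimes> y)" using y s by (simp add: cancel1)
  ultimately show ?thesis by blast
qed

lemma lift_exists:
  assumes "x \<in> carrier H" shows "\<exists>s\<in>carrier S. pi s = x"
proof -
  have "x \<in> pi ` carrier S" using assms pi_surj by simp
  then show ?thesis by (auto simp: image_iff)
qed

lemma pi_gcomm: "x \<in> carrier S \<Longrightarrow> y \<in> carrier S \<Longrightarrow> pi (gcomm S x y) = gcomm H (pi x) (pi y)"
  by (simp add: gcomm_def)

definition cen :: "'c \<Rightarrow> bool" where
  "cen x \<longleftrightarrow> x \<in> carrier S \<and> fst (pi x) = 0 \<and> fst (snd (pi x)) = 0"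

lemma cen_form: "cen x \<Longrightarrow> pi x = (0, 0, snd (snd (pi x)))"
  unfolding cen_def by (metis prod.collapse)

lemma cen_comm_K: "cen x \<Longrightarrow> y \<in> carrier S \<Longrightarrow> gcomm S x y \<in> K"
proof -
  assume c: "cen x" and y: "y \<in> carrier S"
  have xc: "x \<in> carrier S" using c cen_def by auto
  have pyc: "pi y \<in> carrier H" using y by simp
  have "gcomm H (pi x) (pi y) = \<one>\<^bsub>H\<^esub>"
    using group.gcomm_one_iff[OF HG, of "pi x" "pi y"] heis_central[OF pyc, of "snd (snd (pi x))"]
      cen_form[OF c] xc y by simp
  then show ?thesis using xc y pi_gcomm by (simp add: kernel_def)
qed

lemma K_is_cen: "k \<in> K \<Longrightarrow> cen k" by (simp add: K_iff cen_def)

lemma gcomm_K_right: "k \<in> K \<Longrightarrow> x \<in> carrier S \<Longrightarrow> gcomm S x k = \<one>"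
  using K_comm K_carrier gcomm_one_iff by metis

lemma gcomm_K_left: "k \<in> K \<Longrightarrow> x \<in> carrier S \<Longrightarrow> gcomm S k x = \<one>"
  using K_comm K_carrier gcomm_one_iff by metis

lemma gcomm_lift_left: "k \<in> K \<Longrightarrow> s \<in> carrier S \<Longrightarrow> y \<in> carrier S \<Longrightarrow> gcomm S (s \<otimes> k) y = gcomm S s y"
  using gcomm_mult_left[of s k y] gcomm_K_left[of k y] K_carrier by (simp)

lemma gcomm_lift_right: "k \<in> K \<Longrightarrow> s \<in> carrier S \<Longrightarrow> y \<in> carrier S \<Longrightarrow> gcomm S y (s \<otimes> k) = gcomm S y s"
  using gcomm_mult_right[of y s k] gcomm_K_right[of k y] K_carrier by (simp add: m_assoc)

lemma K_conj: "k \<in> K \<Longrightarrow> g \<in> carrier S \<Longrightarrow> g \<otimes> k \<otimes> inv g = k"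
  using conj_central K_comm K_carrier by metis

lemma cen_hom_right:
  assumes "cen x" "y1 \<in> carrier S" "y2 \<in> carrier S"
  shows "gcomm S x (y1 \<otimes> y2) = gcomm S x y1 \<otimes> gcomm S x y2"
  using gcomm_mult_right[of x y1 y2] K_conj[OF cen_comm_K[OF assms(1) assms(3)] assms(2)] assms
  by (simp add: cen_def)

lemma cen_pow_right:
  assumes "cen x" "y \<in> carrier S"
  shows "gcomm S x (y [^] (n::nat)) = (gcomm S x y) [^] n"
proof (induction n)
  case 0
  then show ?case using assms by (simp add: gcomm_def cen_def)
next
  case (Suc n)
  have "gcomm S x (y [^] Suc n) = gcomm S x (y [^] n \<otimes> y)" by simp
  also have "\<dots> = gcomm S x (y [^] n) \<otimes> gcomm S x y"
    by (rule cen_hom_right[OF assms(1) nat_pow_closed[OF assms(2)] assms(2)])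
  also have "\<dots> = (gcomm S x y) [^] Suc n" using Suc by simp
  finally show ?case .
qed

lemma cen_pow: "cen x \<Longrightarrow> cen (x [^] (n::nat))"
proof -
  assume c: "cen x"
  have xc: "x \<in> carrier S" using c cen_def by auto
  have "pi (x [^] n) = (pi x) [^]\<^bsub>H\<^esub> n" using xc by (simp add: ph.hom_nat_pow)
  moreover have "fst ((pi x) [^]\<^bsub>H\<^esub> n) = 0 \<and> fst (snd ((pi x) [^]\<^bsub>H\<^esub> n)) = 0"
    using heis_pow12[OF N1, of "pi x" n] c xc by (simp add: cen_def)
  ultimately show ?thesis using xc by (simp add: cen_def)
qed

lemma cen_pow_left:
  assumes "cen x" "y \<in> carrier S"
  shows "gcomm S (x [^] (n::nat)) y = (gcomm S x y) [^] n"
proof (induction n)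
  case 0
  then show ?case using assms by (simp add: gcomm_def cen_def)
next
  case (Suc n)
  have xc: "x \<in> carrier S" using assms cen_def by auto
  have "gcomm S (x [^] Suc n) y = gcomm S (x [^] n \<otimes> x) y" by simp
  also have "\<dots> = x [^] n \<otimes> gcomm S x y \<otimes> inv (x [^] n) \<otimes> gcomm S (x [^] n) y"
    using gcomm_mult_left xc assms by simp
  also have "\<dots> = gcomm S x y \<otimes> (gcomm S x y) [^] n"
    using K_conj[OF cen_comm_K[OF assms], of "x [^] n"] xc Suc by simp
  also have "\<dots> = (gcomm S x y) [^] Suc n"
    using nat_pow_Suc2[of "gcomm S x y" n] xc assms by simp
  finally show ?case .
qed

lemma gcomm_one_comm: "x \<in> carrier S \<Longrightarrow> y \<in> carrier S \<Longrightarrow> gcomm S x y = \<one> \<Longrightarrow> x \<otimes> y = y \<otimes> x"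
  using gcomm_one_iff by blast

lemma adj_general:
  assumes h: "h \<in> carrier S" and g: "g \<in> carrier S"
    and ph: "pi h = (0, 0, int M mod N)"
    and pg: "pi g = (a, b, c)"
    and ma: "(int M * a) mod N = 0" and mb: "(int M * b) mod N = 0"
  shows "h \<otimes> g = g \<otimes> h"
proof -
  have e3: "(0,0,1) \<in> carrier H" using N1 by (simp add: heis_simps)
  obtain h0 where h0: "h0 \<in> carrier S" "pi h0 = (0,0,1)" using lift_exists[OF e3] by blast
  have ch0: "cen h0" using h0 by (simp add: cen_def)
  have "pi (h0 [^] M) = (0, 0, int M mod N)"
    using h0 by (simp add: ph.hom_nat_pow heis_pow3[OF N1])
  then obtain k where k: "k \<in> K" "h = h0 [^] M \<otimes> k" using lift_decomp[OF h, of "h0 [^] M"] h0 ph by auto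
  have "gcomm S h g = gcomm S (h0 [^] M) g" using k gcomm_lift_left h0 g by simp
  also have "\<dots> = (gcomm S h0 g) [^] M" using cen_pow_left[OF ch0 g] .
  also have "\<dots> = gcomm S h0 (g [^] M)" using cen_pow_right[OF ch0 g] by simp
  finally have eq1: "gcomm S h g = gcomm S h0 (g [^] M)" .
  have gM: "g [^] M \<in> carrier S" using g by simp
  have pgM: "pi (g [^] M) = (pi g) [^]\<^bsub>H\<^esub> M" using g by (simp add: ph.hom_nat_pow)
  have pgc: "pi g \<in> carrier H" using g by simp
  have f1: "fst (pi (g [^] M)) = 0" and f2: "fst (snd (pi (g [^] M))) = 0"
    using heis_pow12[OF N1 pgc, of M] pgM pg ma mb by auto
  define c'' where "c'' = snd (snd (pi (g [^] M)))"
  have pgM2: "pi (g [^] M) = (0,0,c'')" using f1 f2 c''_def by (metis prod.collapse)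
  have c''r: "0 \<le> c''" "c'' < N" using ph.hom_closed[OF gM] pgM2 by (auto simp: heis_simps)
  obtain n :: nat where n: "c'' = int n" using c''r(1) nonneg_int_cases by blast
  have "pi (h0 [^] n) = (0,0,c'')"
    using h0 c''r n by (simp add: ph.hom_nat_pow heis_pow3[OF N1])
  then obtain k' where k': "k' \<in> K" "g [^] M = h0 [^] n \<otimes> k'"
    using lift_decomp[OF gM, of "h0 [^] n"] h0 pgM2 by auto
  have "gcomm S h0 (g [^] M) = gcomm S h0 (h0 [^] n)"
    using k' gcomm_lift_right h0 by simp
  also have "\<dots> = \<one>" using gcomm_self_pow h0 by simp
  finally have "gcomm S h g = \<one>" using eq1 by simp
  then show ?thesis using gcomm_one_comm h g by blast
qed

lemma adj_pow:
  assumes a: "a \<in> carrier S" and b: "b \<in> carrier S" and pb: "pi b = (pi a) [^]\<^bsub>H\<^esub> (n::nat)"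
  shows "a \<otimes> b = b \<otimes> a"
proof -
  have "pi (a [^] n) = pi b" using a pb by (simp add: ph.hom_nat_pow)
  then obtain k where k: "k \<in> K" "b = a [^] n \<otimes> k" using lift_decomp[OF b, of "a [^] n"] a by auto
  have "gcomm S a b = gcomm S a (a [^] n)" using k gcomm_lift_right a by simp
  also have "\<dots> = \<one>" using gcomm_self_pow a by simp
  finally show ?thesis using gcomm_one_comm a b by blast
qed

lemma lifts_commute_images:
  assumes "a \<in> carrier S" "b \<in> carrier S" "a \<otimes> b = b \<otimes> a"
  shows "pi a \<otimes>\<^bsub>H\<^esub> pi b = pi b \<otimes>\<^bsub>H\<^esub> pi a"
  using assms by (metis ph.hom_mult)

end




context heis_stem
begin

lemma cen_mult: "cen x \<Longrightarrow> cen y \<Longrightarrow> cen (x \<otimes> y)"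
proof -
  assume cx: "cen x" and cy: "cen y"
  have xc: "x \<in> carrier S" and yc: "y \<in> carrier S" using cx cy cen_def by auto
  have "pi (x \<otimes> y) = pi x \<otimes>\<^bsub>H\<^esub> pi y" using xc yc by simp
  also have "\<dots> = (0,0,snd (snd (pi x))) \<otimes>\<^bsub>H\<^esub> (0,0,snd (snd (pi y)))"
    using cen_form[OF cx] cen_form[OF cy] by simp
  finally show ?thesis using xc yc by (simp add: cen_def heis_simps)
qed

lemma pow_inv_eq:
  assumes "x \<in> carrier S" "x [^] (n::nat) = \<one>" "n \<ge> 1"
  shows "inv x = x [^] (n - 1)"
proof -
  have "x \<otimes> x [^] (n - 1) = x [^] n"
    using assms nat_pow_Suc2[of x "n - 1"] by simp
  then have "x \<otimes> x [^] (n - 1) = \<one>" using assms by simp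
  then show ?thesis using assms inv_equality[of "x [^] (n - 1)" x] inv_comm[of x "x [^] (n - 1)"]
    by simp
qed

end

locale heis_gen = heis_stem +
  fixes s1 s2
  assumes s1c: "s1 \<in> carrier S" and s2c: "s2 \<in> carrier S"
    and ps1: "pi s1 = (1,0,0)" and ps2: "pi s2 = (0,1,0)"
begin

definition "w = gcomm S s1 s2"
definition "u = gcomm S w s1"
definition "v = gcomm S w s2"
definition "U = {u [^] (i::nat) \<otimes> v [^] (j::nat) | i j. True}"
definition "W = {w [^] (g::nat) \<otimes> q | g q. q \<in> U}"

lemma wc[simp]: "w \<in> carrier S" using s1c s2c by (simp add: w_def)
lemma pw: "pi w = (0,0,1)"
  using pi_gcomm[OF s1c s2c] ps1 ps2 heis_comm12[OF N1] by (simp add: w_def gcomm_def)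
lemma cw: "cen w" using pw by (simp add: cen_def)
lemma uK: "u \<in> K" using cen_comm_K[OF cw s1c] by (simp add: u_def)
lemma vK: "v \<in> K" using cen_comm_K[OF cw s2c] by (simp add: v_def)
lemma uc[simp]: "u \<in> carrier S" using uK K_carrier by blast
lemma vc[simp]: "v \<in> carrier S" using vK K_carrier by blast

lemma nN: "int (nat N) = N" using N1 by simp

lemma s1N: "s1 [^] (nat N) \<in> K"
proof -
  have "pi (s1 [^] (nat N)) = (1,0,0) [^]\<^bsub>H\<^esub> (nat N)" using s1c ps1 by (simp add: ph.hom_nat_pow)
  also have "\<dots> = (0,0,0)" unfolding heis_pow1 nN by simp
  finally show ?thesis using s1c by (simp add: K_iff)
qed

lemma s2N: "s2 [^] (nat N) \<in> K"
proof -
  have "pi (s2 [^] (nat N)) = (0,1,0) [^]\<^bsub>H\<^esub> (nat N)" using s2c ps2 by (simp add: ph.hom_nat_pow)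
  also have "\<dots> = (0,0,0)" unfolding heis_pow2 nN by simp
  finally show ?thesis using s2c by (simp add: K_iff)
qed

lemma uN: "u [^] (nat N) = \<one>"
  using cen_pow_right[OF cw s1c, of "nat N"] gcomm_K_right[OF s1N] by (simp add: u_def)
lemma vN: "v [^] (nat N) = \<one>"
  using cen_pow_right[OF cw s2c, of "nat N"] gcomm_K_right[OF s2N] by (simp add: v_def)

lemma decomp:
  assumes y: "y \<in> carrier S"
  shows "\<exists>a b c k. k \<in> K \<and> y = s1 [^] (a::nat) \<otimes> s2 [^] (b::nat) \<otimes> w [^] (c::nat) \<otimes> k"
proof -
  obtain A B C where pyv: "pi y = (A,B,C)" by (cases "pi y") auto
  have r: "0 \<le> A" "A < N" "0 \<le> B" "B < N" "0 \<le> C" "C < N"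
    using ph.hom_closed[OF y] pyv by (auto simp: heis_simps)
  obtain a :: nat where a: "A = int a" using r(1) nonneg_int_cases by blast
  obtain b :: nat where b: "B = int b" using r(3) nonneg_int_cases by blast
  obtain c :: nat where c: "(C - A * B) mod N = int c"
    using N1 nonneg_int_cases[of "(C - A * B) mod N"] by auto
  let ?s = "s1 [^] a \<otimes> s2 [^] b \<otimes> w [^] c"
  have sc: "?s \<in> carrier S" using s1c s2c by simp
  have "pi ?s = (int a mod N, 0, 0) \<otimes>\<^bsub>H\<^esub> (0, int b mod N, 0) \<otimes>\<^bsub>H\<^esub> (0, 0, int c mod N)"
    using s1c s2c ps1 ps2 pw by (simp add: ph.hom_nat_pow heis_pow1 heis_pow2 heis_pow3[OF N1])
  also have "\<dots> = (A, B, C)"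
  proof -
    have e1: "int a mod N = A" "int b mod N = B" using a b r by simp_all
    have e2: "((A * B) mod N + (C - A * B) mod N) mod N = C"
    proof -
      have "((A * B) mod N + (C - A * B) mod N) mod N = C mod N"
        apply (rule modeq_intro) apply (simp only: mod_as[of _ N]) by algebra
      then show ?thesis using r by simp
    qed
    have e3: "int c mod N = int c" using c by (metis mod_mod_trivial)
    show ?thesis using e1 e2 e3 c r by (simp add: heis_simps)
  qed
  finally have "pi ?s = pi y" using pyv by simp
  then obtain k where "k \<in> K" "y = ?s \<otimes> k" using lift_decomp[OF y sc] by blast
  then show ?thesis by blast
qed

lemma F_val:
  assumes y: "y \<in> carrier S"
  shows "gcomm S w y \<in> U"
proof -
  obtain a b c k where k: "k \<in> K" and ye: "y = s1 [^] (a::nat) \<otimes> s2 [^] (b::nat) \<otimes> w [^] (c::nat) \<otimes> k"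
    using decomp[OF y] by blast
  have kc: "k \<in> carrier S" using k K_carrier by blast
  have "gcomm S w y = gcomm S w (s1 [^] a) \<otimes> gcomm S w (s2 [^] b) \<otimes> gcomm S w (w [^] c) \<otimes> gcomm S w k"
    unfolding ye using s1c s2c kc by (simp add: cen_hom_right[OF cw])
  also have "\<dots> = u [^] a \<otimes> v [^] b"
    using cen_pow_right[OF cw s1c] cen_pow_right[OF cw s2c] gcomm_self_pow[OF wc] gcomm_K_right[OF k wc]
      s1c s2c by (simp add: u_def[symmetric] v_def[symmetric])
  finally show ?thesis by (auto simp: U_def)
qed

lemma U_K: "q \<in> U \<Longrightarrow> q \<in> K"
  using uK vK by (auto simp: U_def intro!: K_mult K_pow)

lemma U_carrier: "q \<in> U \<Longrightarrow> q \<in> carrier S" using U_K K_carrier by blast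

lemma U_comm: "q \<in> U \<Longrightarrow> y \<in> carrier S \<Longrightarrow> q \<otimes> y = y \<otimes> q"
  using U_K K_comm by blast

lemma U_one: "\<one> \<in> U"
  unfolding U_def by (rule CollectI, rule exI[of _ 0], rule exI[of _ 0]) simp

lemma U_mult:
  assumes "q \<in> U" "q' \<in> U" shows "q \<otimes> q' \<in> U"
proof -
  obtain i j where q: "q = u [^] (i::nat) \<otimes> v [^] (j::nat)" using assms(1) by (auto simp: U_def)
  obtain i' j' where q': "q' = u [^] (i'::nat) \<otimes> v [^] (j'::nat)" using assms(2) by (auto simp: U_def)
  have "q \<otimes> q' = u [^] i \<otimes> (v [^] j \<otimes> u [^] i') \<otimes> v [^] j'"
    unfolding q q' by (simp add: m_assoc)
  also have "\<dots> = u [^] i \<otimes> (u [^] i' \<otimes> v [^] j) \<otimes> v [^] j'"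
    using K_comm[OF K_pow[OF uK, of i'], of "v [^] j"] by simp
  also have "\<dots> = u [^] (i + i') \<otimes> v [^] (j + j')"
    by (simp add: m_assoc nat_pow_mult[symmetric])
  finally show ?thesis by (auto simp: U_def)
qed

lemma U_pow: "q \<in> U \<Longrightarrow> q [^] (n::nat) \<in> U"
  by (induction n) (auto simp: U_one U_mult)

lemma U_inv:
  assumes "q \<in> U" shows "inv q \<in> U"
proof -
  obtain i j where q: "q = u [^] (i::nat) \<otimes> v [^] (j::nat)" using assms(1) by (auto simp: U_def)
  have N1': "nat N \<ge> 1" using N1 by simp
  have iu: "inv u = u [^] (nat N - 1)" using pow_inv_eq[OF uc uN N1'] .
  have iv: "inv v = v [^] (nat N - 1)" using pow_inv_eq[OF vc vN N1'] .
  have "inv q = inv (v [^] j) \<otimes> inv (u [^] i)" unfolding q by (simp add: inv_mult_group)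
  also have "\<dots> = (inv v) [^] j \<otimes> (inv u) [^] i" by (simp add: nat_pow_inv)
  also have "\<dots> = (inv u) [^] i \<otimes> (inv v) [^] j"
    using K_comm[OF K_pow[OF K_inv[OF uK]], of "(inv v) [^] j"] by simp
  also have "\<dots> = u [^] ((nat N - 1) * i) \<otimes> v [^] ((nat N - 1) * j)"
    unfolding iu iv by (simp add: nat_pow_pow)
  finally show ?thesis by (auto simp: U_def)
qed

lemma cen_comm_U:
  assumes d: "cen d" and y: "y \<in> carrier S"
  shows "gcomm S d y \<in> U" "gcomm S y d \<in> U"
proof -
  have dc: "d \<in> carrier S" using d cen_def by auto
  obtain c0 where pd: "pi d = (0,0,c0)" using cen_form[OF d] by blast
  have r: "0 \<le> c0" "c0 < N" using ph.hom_closed[OF dc] pd by (auto simp: heis_simps)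
  obtain n :: nat where n: "c0 = int n" using r(1) nonneg_int_cases by blast
  have "pi (w [^] n) = (0,0,c0)" using pw n r by (simp add: ph.hom_nat_pow heis_pow3[OF N1])
  then obtain k where k: "k \<in> K" "d = w [^] n \<otimes> k" using lift_decomp[OF dc, of "w [^] n"] pd by auto
  have "gcomm S d y = gcomm S (w [^] n) y" using k gcomm_lift_left y by simp
  also have "\<dots> = (gcomm S w y) [^] n" using cen_pow_left[OF cw y] .
  finally show 1: "gcomm S d y \<in> U" using U_pow[OF F_val[OF y]] by simp
  have "gcomm S y d = inv (gcomm S d y)" using gcomm_inv dc y by simp
  then show "gcomm S y d \<in> U" using U_inv[OF 1] by simp
qed

lemma comm_s1pow: "\<exists>m::nat. gcomm S (s1 [^] (n::nat)) s2 = w [^] n \<otimes> (inv u) [^] m"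
proof (induction n)
  case 0
  then show ?case using s2c by (intro exI[of _ 0]) (simp add: gcomm_def)
next
  case (Suc n)
  then obtain m :: nat where m: "gcomm S (s1 [^] n) s2 = w [^] n \<otimes> (inv u) [^] m" by blast
  let ?c = "inv u"
  have cK: "?c \<in> K" using K_inv[OF uK] .
  have cc: "?c \<in> carrier S" by simp
  have sw: "s1 \<otimes> w \<otimes> inv s1 = ?c \<otimes> w"
    using conj_as_gcomm[OF s1c wc] gcomm_inv[OF wc s1c] by (simp add: u_def)
  have "gcomm S (s1 [^] Suc n) s2 = gcomm S (s1 \<otimes> s1 [^] n) s2"
    using nat_pow_Suc2[OF s1c] by simp
  also have "\<dots> = s1 \<otimes> gcomm S (s1 [^] n) s2 \<otimes> inv s1 \<otimes> gcomm S s1 s2"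
    using gcomm_mult_left s1c s2c by simp
  also have "\<dots> = s1 \<otimes> (w [^] n \<otimes> ?c [^] m) \<otimes> inv s1 \<otimes> w" unfolding m w_def by simp
  also have "\<dots> = (s1 \<otimes> w [^] n \<otimes> inv s1) \<otimes> (s1 \<otimes> ?c [^] m \<otimes> inv s1) \<otimes> w"
    using conj_mult[OF s1c, of "w [^] n" "?c [^] m"] by simp
  also have "\<dots> = (?c \<otimes> w) [^] n \<otimes> ?c [^] m \<otimes> w"
    using conj_pow[OF s1c wc, of n] sw K_conj[OF K_pow[OF cK, of m] s1c] by simp
  also have "\<dots> = ?c [^] n \<otimes> w [^] n \<otimes> ?c [^] m \<otimes> w"
    using pow_mult_distrib[of ?c w n] K_comm[OF cK wc] by simp
  also have "\<dots> = w [^] n \<otimes> w \<otimes> (?c [^] n \<otimes> ?c [^] m)"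
  proof -
    have a1: "?c [^] n \<otimes> w [^] n = w [^] n \<otimes> ?c [^] n" using K_comm[OF K_pow[OF cK, of n], of "w [^] n"] by simp
    have a2: "?c [^] m \<otimes> w = w \<otimes> ?c [^] m" using K_comm[OF K_pow[OF cK, of m] wc] .
    have a3: "?c [^] n \<otimes> w = w \<otimes> ?c [^] n" using K_comm[OF K_pow[OF cK, of n] wc] .
    show ?thesis using a1 a2 a3 by (simp add: m_assoc) (metis a3 cc m_assoc nat_pow_closed wc)
  qed
  also have "\<dots> = w [^] Suc n \<otimes> ?c [^] (n + m)" by (simp add: nat_pow_mult)
  finally show ?case by blast
qed

lemma wN_U: "w [^] (nat N) \<in> U"
proof -
  obtain m :: nat where m: "gcomm S (s1 [^] (nat N)) s2 = w [^] (nat N) \<otimes> (inv u) [^] m"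
    using comm_s1pow by blast
  have "gcomm S (s1 [^] (nat N)) s2 = \<one>" using gcomm_K_left[OF s1N s2c] .
  then have "w [^] (nat N) \<otimes> (inv u) [^] m = \<one>" using m by simp
  then have "w [^] (nat N) = inv ((inv u) [^] m)"
    using inv_equality[of "w [^] (nat N)" "(inv u) [^] m"] by (simp add: inv_comm)
  also have "\<dots> = u [^] m \<otimes> v [^] (0::nat)" by (simp add: nat_pow_inv[symmetric])
  finally show ?thesis unfolding U_def by blast
qed

lemma W_carrier: "x \<in> W \<Longrightarrow> x \<in> carrier S" using U_carrier by (auto simp: W_def)

lemma U_W: "q \<in> U \<Longrightarrow> q \<in> W"
proof -
  assume q: "q \<in> U"
  then have "q = w [^] (0::nat) \<otimes> q" using U_carrier by simp
  then show ?thesis using q unfolding W_def by blast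
qed

lemma W_mult:
  assumes "x \<in> W" "y \<in> W" shows "x \<otimes> y \<in> W"
proof -
  obtain g q where x: "x = w [^] (g::nat) \<otimes> q" "q \<in> U" using assms(1) by (auto simp: W_def)
  obtain g' q' where y: "y = w [^] (g'::nat) \<otimes> q'" "q' \<in> U" using assms(2) by (auto simp: W_def)
  have qc: "q \<in> carrier S" "q' \<in> carrier S" using x y U_carrier by auto
  have "x \<otimes> y = w [^] g \<otimes> (q \<otimes> w [^] g') \<otimes> q'" unfolding x y using qc by (simp add: m_assoc)
  also have "\<dots> = w [^] g \<otimes> (w [^] g' \<otimes> q) \<otimes> q'" using U_comm[OF x(2), of "w [^] g'"] by simp
  also have "\<dots> = w [^] (g + g') \<otimes> (q \<otimes> q')" using qc by (simp add: m_assoc nat_pow_mult[symmetric])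
  finally show ?thesis using U_mult[OF x(2) y(2)] by (auto simp: W_def)
qed

lemma W_w: "w \<in> W"
  unfolding W_def using U_one by (auto intro!: exI[of _ 1] exI[of _ \<one>])

lemma W_invw: "inv w \<in> W"
proof -
  have N1': "nat N \<ge> 1" using N1 by simp
  have e: "w [^] (nat N) = w \<otimes> w [^] (nat N - 1)" using nat_pow_Suc2[of w "nat N - 1"] N1' by simp
  have "inv w = w [^] (nat N - 1) \<otimes> inv (w [^] (nat N))"
    unfolding e by (simp add: inv_mult_group m_assoc[symmetric])
  then show ?thesis using U_inv[OF wN_U] by (auto simp: W_def)
qed

lemma W_conj:
  assumes g: "g \<in> carrier S" and x: "x \<in> W" shows "g \<otimes> x \<otimes> inv g \<in> W"
proof -
  obtain n q where xe: "x = w [^] (n::nat) \<otimes> q" "q \<in> U" using x by (auto simp: W_def)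
  have qc: "q \<in> carrier S" using xe U_carrier by auto
  define r where "r = gcomm S g w"
  have rU: "r \<in> U" using cen_comm_U(2)[OF cw g] by (simp add: r_def)
  have rc: "r \<in> carrier S" using U_carrier[OF rU] .
  have "g \<otimes> x \<otimes> inv g = (g \<otimes> w [^] n \<otimes> inv g) \<otimes> (g \<otimes> q \<otimes> inv g)"
    unfolding xe(1) using conj_mult[OF g, of "w [^] n" q] qc by simp
  also have "\<dots> = (r \<otimes> w) [^] n \<otimes> q"
    using conj_pow[OF g wc, of n] conj_as_gcomm[OF g wc] K_conj[OF U_K[OF xe(2)] g] by (simp add: r_def)
  also have "\<dots> = w [^] n \<otimes> (r [^] n \<otimes> q)"
    using pow_mult_distrib[of r w n] U_comm[OF rU wc] U_comm[OF U_pow[OF rU, of n], of "w [^] n"] rc qc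
    by (simp add: m_assoc)
  finally show ?thesis using U_mult[OF U_pow[OF rU] xe(2)] by (auto simp: W_def)
qed

lemma gen_all:
  assumes P1: "P \<one>" and Ps1: "P s1" and Ps2: "P s2" and Pcen: "\<And>d. cen d \<Longrightarrow> P d"
    and Pm: "\<And>x y. x \<in> carrier S \<Longrightarrow> y \<in> carrier S \<Longrightarrow> P x \<Longrightarrow> P y \<Longrightarrow> P (x \<otimes> y)"
    and y: "y \<in> carrier S"
  shows "P y"
proof -
  have pw: "\<And>x n. x \<in> carrier S \<Longrightarrow> P x \<Longrightarrow> P (x [^] (n::nat))"
  proof -
    fix x n assume "x \<in> carrier S" "P x"
    then show "P (x [^] (n::nat))" by (induction n) (auto simp: P1 Pm)
  qed
  obtain a b c k where k: "k \<in> K" and ye: "y = s1 [^] (a::nat) \<otimes> s2 [^] (b::nat) \<otimes> w [^] (c::nat) \<otimes> k"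
    using decomp[OF y] by blast
  have kc: "k \<in> carrier S" using k K_carrier by blast
  have cd: "cen (w [^] c \<otimes> k)" using cen_mult[OF cen_pow[OF cw] K_is_cen[OF k]] .
  have "y = s1 [^] a \<otimes> s2 [^] b \<otimes> (w [^] c \<otimes> k)" unfolding ye using s1c s2c kc by (simp add: m_assoc)
  moreover have "P (s1 [^] a \<otimes> s2 [^] b \<otimes> (w [^] c \<otimes> k))"
    using Pm pw Ps1 Ps2 s1c s2c Pcen[OF cd] kc by simp
  ultimately show ?thesis by simp
qed

lemma comm_W_right:
  assumes x: "x \<in> carrier S" and xs1: "gcomm S x s1 \<in> W" and xs2: "gcomm S x s2 \<in> W"
    and y: "y \<in> carrier S"
  shows "gcomm S x y \<in> W"
proof -
  have "gcomm S x y \<in> W \<and> True" 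
  proof (rule gen_all[where P = "\<lambda>y. gcomm S x y \<in> W \<and> True", OF _ _ _ _ _ y])
    show "gcomm S x \<one> \<in> W \<and> True" using x U_W[OF U_one] by (simp add: gcomm_def)
    show "gcomm S x s1 \<in> W \<and> True" using xs1 by simp
    show "gcomm S x s2 \<in> W \<and> True" using xs2 by simp
    show "gcomm S x d \<in> W \<and> True" if "cen d" for d using U_W[OF cen_comm_U(2)[OF that x]] by simp
    show "gcomm S x (y1 \<otimes> y2) \<in> W \<and> True"
      if "y1 \<in> carrier S" "y2 \<in> carrier S" "gcomm S x y1 \<in> W \<and> True" "gcomm S x y2 \<in> W \<and> True" for y1 y2
      using gcomm_mult_right[OF x that(1,2)] W_mult W_conj that by simp
  qed
  then show ?thesis by simp
qed

lemma all_comm_W: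
  assumes x: "x \<in> carrier S" and y: "y \<in> carrier S"
  shows "gcomm S x y \<in> W"
proof -
  have s1W: "gcomm S s1 z \<in> W" if "z \<in> carrier S" for z
  proof (rule comm_W_right[OF s1c _ _ that])
    show "gcomm S s1 s1 \<in> W" using gcomm_self_pow[OF s1c, of 1] U_W[OF U_one] s1c by simp
    show "gcomm S s1 s2 \<in> W" using W_w by (simp add: w_def)
  qed
  have s2W: "gcomm S s2 z \<in> W" if "z \<in> carrier S" for z
  proof (rule comm_W_right[OF s2c _ _ that])
    show "gcomm S s2 s1 \<in> W" using gcomm_inv[OF s1c s2c] W_invw by (simp add: w_def)
    show "gcomm S s2 s2 \<in> W" using gcomm_self_pow[OF s2c, of 1] U_W[OF U_one] s2c by simp
  qed
  have "(\<forall>z\<in>carrier S. gcomm S x z \<in> W)"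
  proof (rule gen_all[where P = "\<lambda>x. \<forall>z\<in>carrier S. gcomm S x z \<in> W", OF _ _ _ _ _ x])
    show "\<forall>z\<in>carrier S. gcomm S \<one> z \<in> W" using U_W[OF U_one] by (simp add: gcomm_def)
    show "\<forall>z\<in>carrier S. gcomm S s1 z \<in> W" using s1W by blast
    show "\<forall>z\<in>carrier S. gcomm S s2 z \<in> W" using s2W by blast
    show "\<forall>z\<in>carrier S. gcomm S d z \<in> W" if "cen d" for d using U_W[OF cen_comm_U(1)[OF that]] by blast
    show "\<forall>z\<in>carrier S. gcomm S (x1 \<otimes> x2) z \<in> W"
      if "x1 \<in> carrier S" "x2 \<in> carrier S" "\<forall>z\<in>carrier S. gcomm S x1 z \<in> W"
         "\<forall>z\<in>carrier S. gcomm S x2 z \<in> W" for x1 x2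
      using gcomm_mult_left[OF that(1,2)] W_mult W_conj that by simp
  qed
  then show ?thesis using y by blast
qed

lemma derived_W: "derived S (carrier S) \<subseteq> W"
proof
  fix x assume "x \<in> derived S (carrier S)"
  then show "x \<in> W" unfolding derived_def
  proof (induction rule: generate.induct)
    case one
    then show ?case using U_W[OF U_one] by simp
  next
    case (incl h)
    then show ?case using all_comm_W by (auto simp: gcomm_def)
  next
    case (inv h)
    then obtain a b where ab: "a \<in> carrier S" "b \<in> carrier S" "h = gcomm S a b" by (auto simp: gcomm_def)
    then show ?case using gcomm_inv[OF ab(1,2)] all_comm_W[OF ab(2,1)] by simp
  next
    case (eng h1 h2)
    then show ?case using W_mult by blast
  qed
qed

lemma K_U: "k \<in> K \<Longrightarrow> k \<in> U"
proof -
  assume k: "k \<in> K"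
  then have "k \<in> W" using ker_derived derived_W by blast
  then obtain g q where ke: "k = w [^] (g::nat) \<otimes> q" "q \<in> U" by (auto simp: W_def)
  have qK: "q \<in> K" using U_K[OF ke(2)] .
  have pwg: "pi (w [^] g) = (0,0,int g mod N)" using pw by (simp add: ph.hom_nat_pow heis_pow3[OF N1])
  have "pi k = pi (w [^] g) \<otimes>\<^bsub>H\<^esub> pi q" using ke U_carrier by simp
  also have "\<dots> = (0,0,int g mod N) \<otimes>\<^bsub>H\<^esub> (0,0,0)" using pwg qK by (simp add: K_iff)
  also have "\<dots> = (0,0,int g mod N)" by (simp add: heis_simps)
  finally have "(0,0,int g mod N) = (0,0,0::int)" using k by (simp add: K_iff)
  then have "N dvd int g" by (simp add: dvd_eq_mod_eq_0)
  then obtain t where t: "int g = N * t" by blast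
  have "t \<ge> 0"
  proof (rule ccontr)
    assume "\<not> t \<ge> 0"
    then have "N * t < 0" using N1 by (simp add: mult_pos_neg)
    then show False using t by simp
  qed
  then obtain t' :: nat where "t = int t'" using nonneg_int_cases by blast
  then have "int g = int (nat N * t')" using t N1 by simp
  then have "g = nat N * t'" by (simp only: of_nat_eq_iff)
  then have "w [^] g = (w [^] (nat N)) [^] t'" by (simp add: nat_pow_pow)
  then have "w [^] g \<in> U" using U_pow[OF wN_U] by simp
  then show "k \<in> U" using ke U_mult by simp
qed

lemma U_small: "U \<subseteq> (\<lambda>(i,j). u [^] i \<otimes> v [^] j) ` ({..<nat N} \<times> {..<nat N})"
proof
  fix q assume "q \<in> U"
  then obtain i j where q: "q = u [^] (i::nat) \<otimes> v [^] (j::nat)" by (auto simp: U_def)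
  have pm: "x [^] (nat N) = \<one> \<Longrightarrow> x \<in> carrier S \<Longrightarrow> x [^] (n::nat) = x [^] (n mod nat N)" for x n
  proof -
    assume a: "x [^] (nat N) = \<one>" "x \<in> carrier S"
    have "x [^] (nat N * (n div nat N) + n mod nat N) = x [^] (nat N * (n div nat N)) \<otimes> x [^] (n mod nat N)"
      using a(2) by (simp only: nat_pow_mult)
    also have "\<dots> = (x [^] nat N) [^] (n div nat N) \<otimes> x [^] (n mod nat N)"
      using a(2) by (simp only: nat_pow_pow)
    also have "\<dots> = x [^] (n mod nat N)" using a by simp
    finally have h: "x [^] (nat N * (n div nat N) + n mod nat N) = x [^] (n mod nat N)" .
    have e: "nat N * (n div nat N) + n mod nat N = n" by (rule mult_div_mod_eq)
    show ?thesis using h unfolding e .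
  qed
  have e1: "u [^] i = u [^] (i mod nat N)" by (rule pm[OF uN uc])
  have e2: "v [^] j = v [^] (j mod nat N)" by (rule pm[OF vN vc])
  have qe: "q = (\<lambda>(i,j). u [^] i \<otimes> v [^] j) (i mod nat N, j mod nat N)"
    unfolding q by (simp only: e1 e2 case_prod_conv)
  have "(i mod nat N, j mod nat N) \<in> {..<nat N} \<times> {..<nat N}" using N1 by simp
  then show "q \<in> (\<lambda>(i,j). u [^] i \<otimes> v [^] j) ` ({..<nat N} \<times> {..<nat N})"
    using qe by (rule rev_image_eqI)
qed

lemma card_K_le: "card K \<le> nat N * nat N"
proof -
  have "K \<subseteq> (\<lambda>(i,j). u [^] i \<otimes> v [^] j) ` ({..<nat N} \<times> {..<nat N})"
    using K_U U_small by blast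
  then have "card K \<le> card ((\<lambda>(i,j). u [^] i \<otimes> v [^] j) ` ({..<nat N} \<times> {..<nat N}))"
    by (rule card_mono[rotated]) simp
  also have "\<dots> \<le> card ({..<nat N} \<times> {..<nat N})" by (rule card_image_le) simp
  finally show ?thesis by (simp add: card_cartesian_product)
qed

end

context heis_stem
begin

lemma card_kernel_bound: "card K \<le> nat N * nat N"
proof -
  have c1: "(1,0,0) \<in> carrier H" "(0,1,0) \<in> carrier H" using N1 by (auto simp: heis_simps)
  obtain s1 where s1: "s1 \<in> carrier S" "pi s1 = (1,0,0)" using lift_exists[OF c1(1)] by blast
  obtain s2 where s2: "s2 \<in> carrier S" "pi s2 = (0,1,0)" using lift_exists[OF c1(2)] by blast
  interpret hg: heis_gen S pi N s1 s2
    by (unfold_locales) (use s1 s2 in auto)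
  show ?thesis using hg.card_K_le .
qed

end




definition cov :: "int \<Rightarrow> (int \<times> int \<times> int \<times> int \<times> int) monoid" where
  "cov n = \<lparr> carrier = {0..<n} \<times> {0..<n} \<times> {0..<n} \<times> {0..<n} \<times> {0..<n},
     monoid.mult = (\<lambda>(a, b, x, z, t) (a', b', x', z', t').
        ((a + a') mod n, (b + b') mod n, (x + x' + a * b') mod n,
         (z + z' + a * (a' * b' - x') + x * a') mod n, (t + t' + b * x' + (a * b - x) * b') mod n)),
     monoid.one = (0,0,0,0,0) \<rparr>"

lemma cov_simps:
  "carrier (cov n) = {0..<n} \<times> {0..<n} \<times> {0..<n} \<times> {0..<n} \<times> {0..<n}"
  "\<one>\<^bsub>cov n\<^esub> = (0,0,0,0,0)"
  "(a, b, x, z, t) \<otimes>\<^bsub>cov n\<^esub> (a', b', x', z', t') =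
        ((a + a') mod n, (b + b') mod n, (x + x' + a * b') mod n,
         (z + z' + a * (a' * b' - x') + x * a') mod n, (t + t' + b * x' + (a * b - x) * b') mod n)"
  by (simp_all add: cov_def)

lemma cov_group:
  assumes N1: "(N::int) > 1"
  shows "group (cov N)"
proof (rule groupI)
  fix g h assume "g \<in> carrier (cov N)" "h \<in> carrier (cov N)"
  then show "g \<otimes>\<^bsub>cov N\<^esub> h \<in> carrier (cov N)"
    using N1 by (cases g, cases h) (auto simp: cov_simps)
next
  show "\<one>\<^bsub>cov N\<^esub> \<in> carrier (cov N)" using N1 by (simp add: cov_simps)
next
  fix g h k assume "g \<in> carrier (cov N)" "h \<in> carrier (cov N)" "k \<in> carrier (cov N)"
  obtain a b x z t where g: "g = (a,b,x,z,t)" by (cases g) auto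
  obtain a' b' x' z' t' where h: "h = (a',b',x',z',t')" by (cases h) auto
  obtain a'' b'' x'' z'' t'' where k: "k = (a'',b'',x'',z'',t'')" by (cases k) auto
  show "g \<otimes>\<^bsub>cov N\<^esub> h \<otimes>\<^bsub>cov N\<^esub> k = g \<otimes>\<^bsub>cov N\<^esub> (h \<otimes>\<^bsub>cov N\<^esub> k)"
    unfolding g h k cov_simps prod.case
    apply (intro conjI prod_eqI; simp only: fst_conv snd_conv)
    by (rule modeq_intro, simp only: mod_as[of _ N], algebra)+
next
  fix g assume "g \<in> carrier (cov N)"
  then show "\<one>\<^bsub>cov N\<^esub> \<otimes>\<^bsub>cov N\<^esub> g = g"
    by (cases g) (auto simp: cov_simps)
next
  fix g assume gc: "g \<in> carrier (cov N)"
  obtain a b x z t where g: "g = (a,b,x,z,t)" by (cases g) auto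
  let ?h = "((- a) mod N, (- b) mod N, (a * b - x) mod N, (- z) mod N, (- t) mod N)"
  have "?h \<in> carrier (cov N)" using N1 by (simp add: cov_simps)
  moreover have "?h \<otimes>\<^bsub>cov N\<^esub> g = \<one>\<^bsub>cov N\<^esub>"
    unfolding g cov_simps prod.case
    apply (intro conjI prod_eqI; simp only: fst_conv snd_conv)
    by (rule modeq0_intro, simp only: mod_as[of _ N], algebra)+
  ultimately show "\<exists>h\<in>carrier (cov N). h \<otimes>\<^bsub>cov N\<^esub> g = \<one>\<^bsub>cov N\<^esub>" by blast
qed


lemma cov_inv:
  assumes N1: "(N::int) > 1" and g: "(a,b,x,z,t) \<in> carrier (cov N)"
  shows "inv\<^bsub>cov N\<^esub> (a,b,x,z,t) = ((- a) mod N, (- b) mod N, (a * b - x) mod N, (- z) mod N, (- t) mod N)"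
proof -
  interpret C: group "cov N" using cov_group[OF N1] .
  have hc: "((- a) mod N, (- b) mod N, (a * b - x) mod N, (- z) mod N, (- t) mod N) \<in> carrier (cov N)"
    using N1 by (simp add: cov_simps)
  have "((- a) mod N, (- b) mod N, (a * b - x) mod N, (- z) mod N, (- t) mod N) \<otimes>\<^bsub>cov N\<^esub> (a,b,x,z,t) = \<one>\<^bsub>cov N\<^esub>"
    unfolding cov_simps prod.case
    apply (intro conjI prod_eqI; simp only: fst_conv snd_conv)
    by (rule modeq0_intro, simp only: mod_as[of _ N], algebra)+
  then show ?thesis using C.inv_equality[OF _ g hc] by simp
qed

definition pi0 :: "int \<times> int \<times> int \<times> int \<times> int \<Rightarrow> int \<times> int \<times> int" where
  "pi0 g = (case g of (a, b, x, z, t) \<Rightarrow> (a, b, x))"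

lemma modeqc_intro: "0 \<le> z \<Longrightarrow> z < N \<Longrightarrow> (\<exists>k. x = z + N*k) \<Longrightarrow> (x::int) mod N = z"
  by auto

lemma cov_comm_formula:
  assumes N1: "(N::int) > 1" and hN: "N + 1 = 2 * hh"
    and z: "0 \<le> z" "z < N" and t: "0 \<le> t" "t < N"
  shows "gcomm (cov N) (0,0,1,0,0) ((z * hh) mod N, ((- t) * hh) mod N, 0, 0, 0) = (0,0,0,z,t)"
proof -
  have c1: "(0,0,1,0,0) \<in> carrier (cov N)" using N1 by (simp add: cov_simps)
  have c2: "((z * hh) mod N, ((- t) * hh) mod N, 0, 0, 0) \<in> carrier (cov N)" using N1 by (simp add: cov_simps)
  show ?thesis
    unfolding gcomm_def cov_inv[OF N1 c1] cov_inv[OF N1 c2] cov_simps prod.case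
    apply (intro conjI prod_eqI; simp only: fst_conv snd_conv)
        apply (rule modeq0_intro, simp only: mod_as[of _ N], algebra)
       apply (rule modeq0_intro, simp only: mod_as[of _ N], algebra)
      apply (rule modeq0_intro, simp only: mod_as[of _ N], algebra)
     apply (rule modeqc_intro[OF z], simp only: mod_as[of _ N]) using hN apply algebra
    apply (rule modeqc_intro[OF t], simp only: mod_as[of _ N]) using hN apply algebra
    done
qed


lemma cov_kernel:
  "kernel (cov N) (heisenberg N) pi0 = (\<lambda>(z,t). (0,0,0,z,t)) ` ({0..<N} \<times> {0..<N})"
  by (auto simp: kernel_def cov_simps heis_simps pi0_def image_iff)

lemma cov_card_kernel: "card (kernel (cov N) (heisenberg N) pi0) = nat N * nat N"
proof -
  have "inj_on (\<lambda>(z,t). (0::int,0::int,0::int,z::int,t::int)) ({0..<N} \<times> {0..<N})"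
    by (auto simp: inj_on_def)
  then have "card ((\<lambda>(z,t). (0::int,0::int,0::int,z::int,t::int)) ` ({0..<N} \<times> {0..<N})) = card ({0..<N} \<times> {0..<N::int})"
    by (rule card_image)
  then show ?thesis unfolding cov_kernel by (simp add: card_cartesian_product)
qed

lemma cov_finite: "finite (carrier (cov N))" by (simp add: cov_simps)

lemma cov_stem:
  assumes N1: "(N::int) > 1" and oddN: "odd N"
  shows "stem_extension (cov N) (heisenberg N) pi0"
  unfolding stem_extension_def
proof (intro conjI)
  interpret C: group "cov N" using cov_group[OF N1] .
  show "group (cov N)" using cov_group[OF N1] .
  show "pi0 \<in> epi (cov N) (heisenberg N)"
  proof -
    have "pi0 \<in> hom (cov N) (heisenberg N)"
    proof (rule homI)
      fix g assume "g \<in> carrier (cov N)" then show "pi0 g \<in> carrier (heisenberg N)"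
        by (auto simp: cov_simps heis_simps pi0_def)
    next
      fix g h assume "g \<in> carrier (cov N)" "h \<in> carrier (cov N)"
      then show "pi0 (g \<otimes>\<^bsub>cov N\<^esub> h) = pi0 g \<otimes>\<^bsub>heisenberg N\<^esub> pi0 h"
        by (cases g, cases h) (simp add: cov_simps heis_simps pi0_def)
    qed
    moreover have "pi0 ` carrier (cov N) = carrier (heisenberg N)"
    proof
      show "pi0 ` carrier (cov N) \<subseteq> carrier (heisenberg N)" by (auto simp: cov_simps heis_simps pi0_def)
      show "carrier (heisenberg N) \<subseteq> pi0 ` carrier (cov N)"
      proof
        fix y assume y: "y \<in> carrier (heisenberg N)"
        obtain a b c where ye: "y = (a,b,c)" by (cases y) auto
        have "(a,b,c,0,0) \<in> carrier (cov N)" using y ye N1 by (simp add: cov_simps heis_simps)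
        moreover have "pi0 (a,b,c,0,0) = y" using ye by (simp add: pi0_def)
        ultimately show "y \<in> pi0 ` carrier (cov N)" by (metis image_eqI)
      qed
    qed
    ultimately show ?thesis by (simp add: epi_def)
  qed
  show "kernel (cov N) (heisenberg N) pi0 \<subseteq> group_center (cov N) \<inter> derived (cov N) (carrier (cov N))"
  proof
    fix k assume k: "k \<in> kernel (cov N) (heisenberg N) pi0"
    then obtain z t where ke: "k = (0,0,0,z,t)" and zt: "0 \<le> z" "z < N" "0 \<le> t" "t < N"
      unfolding cov_kernel by auto
    have kc: "k \<in> carrier (cov N)" using ke zt N1 by (simp add: cov_simps)
    have "k \<in> group_center (cov N)"
      unfolding group_center_def
    proof (intro CollectI conjI ballI kc)
      fix g assume "g \<in> carrier (cov N)"
      then show "k \<otimes>\<^bsub>cov N\<^esub> g = g \<otimes>\<^bsub>cov N\<^esub> k"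
        unfolding ke by (cases g) (simp add: cov_simps algebra_simps)
    qed
    moreover have "k \<in> derived (cov N) (carrier (cov N))"
    proof -
      obtain m where m: "N = 2 * m + 1" using oddN by (metis oddE)
      have hN: "N + 1 = 2 * (m + 1)" using m by simp
      have c1: "(0,0,1,0,0) \<in> carrier (cov N)" using N1 by (simp add: cov_simps)
      have c2: "((z * (m+1)) mod N, ((- t) * (m+1)) mod N, 0, 0, 0) \<in> carrier (cov N)" using N1 by (simp add: cov_simps)
      have "k = gcomm (cov N) (0,0,1,0,0) ((z * (m+1)) mod N, ((- t) * (m+1)) mod N, 0, 0, 0)"
        using cov_comm_formula[OF N1 hN zt] ke by simp
      then have "k \<in> derived_set (cov N) (carrier (cov N))"
        using c1 c2 unfolding gcomm_def by blast
      then show ?thesis unfolding derived_def by (rule generate.incl)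
    qed
    ultimately show "k \<in> group_center (cov N) \<inter> derived (cov N) (carrier (cov N))" by blast
  qed
qed

lemma cov_comm_central:
  assumes eq: "(0,0,c,z,t) \<otimes>\<^bsub>cov N\<^esub> (a',b',x',z',t') = (a',b',x',z',t') \<otimes>\<^bsub>cov N\<^esub> (0,0,c,z,t)"
  shows "(2 * c * a') mod N = 0 \<and> (2 * c * b') mod N = 0"
proof -
  have e4: "(z + z' + c * a') mod N = (z' + z - a' * c) mod N"
    and e5: "(t + t' - c * b') mod N = (t' + t + b' * c) mod N"
    using eq by (simp_all add: cov_simps algebra_simps)
  have d4: "N dvd (z + z' + c * a') - (z' + z - a' * c)" using e4 by (simp add: mod_eq_dvd_iff)
  have d5: "N dvd (t' + t + b' * c) - (t + t' - c * b')" using e5 by (simp add: mod_eq_dvd_iff)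
  have "(z + z' + c * a') - (z' + z - a' * c) = 2 * c * a'" by algebra
  moreover have "(t' + t + b' * c) - (t + t' - c * b') = 2 * c * b'" by algebra
  ultimately show ?thesis using d4 d5 by (auto simp: dvd_eq_mod_eq_0[symmetric] algebra_simps)
qed




definition tr :: "('a \<Rightarrow> nat) \<Rightarrow> ('a, 'b) monoid_scheme \<Rightarrow> nat monoid" where
  "tr f T = \<lparr> carrier = f ` carrier T,
     monoid.mult = (\<lambda>x y. f (inv_into (carrier T) f x \<otimes>\<^bsub>T\<^esub> inv_into (carrier T) f y)),
     monoid.one = f \<one>\<^bsub>T\<^esub> \<rparr>"

locale trans_grp = T?: group T for T (structure) +
  fixes f :: "'a \<Rightarrow> nat"
  assumes inj: "inj_on f (carrier T)"
begin

abbreviation "g \<equiv> inv_into (carrier T) f"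

lemma gf[simp]: "x \<in> carrier T \<Longrightarrow> g (f x) = x" using inj by (simp add: inv_into_f_f)

lemma tr_carrier: "carrier (tr f T) = f ` carrier T" by (simp add: tr_def)
lemma tr_one: "\<one>\<^bsub>tr f T\<^esub> = f \<one>" by (simp add: tr_def)
lemma tr_mult: "x \<in> carrier T \<Longrightarrow> y \<in> carrier T \<Longrightarrow> f x \<otimes>\<^bsub>tr f T\<^esub> f y = f (x \<otimes> y)"
  by (simp add: tr_def)

lemma tr_group: "group (tr f T)"
proof (rule groupI)
  fix a b assume "a \<in> carrier (tr f T)" "b \<in> carrier (tr f T)"
  then show "a \<otimes>\<^bsub>tr f T\<^esub> b \<in> carrier (tr f T)" by (auto simp: tr_carrier tr_mult)
next
  show "\<one>\<^bsub>tr f T\<^esub> \<in> carrier (tr f T)" by (simp add: tr_carrier tr_one)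
next
  fix a b c assume "a \<in> carrier (tr f T)" "b \<in> carrier (tr f T)" "c \<in> carrier (tr f T)"
  then show "a \<otimes>\<^bsub>tr f T\<^esub> b \<otimes>\<^bsub>tr f T\<^esub> c = a \<otimes>\<^bsub>tr f T\<^esub> (b \<otimes>\<^bsub>tr f T\<^esub> c)"
    by (auto simp: tr_carrier tr_mult m_assoc)
next
  fix a assume "a \<in> carrier (tr f T)"
  then show "\<one>\<^bsub>tr f T\<^esub> \<otimes>\<^bsub>tr f T\<^esub> a = a" by (auto simp: tr_carrier tr_mult tr_one)
next
  fix a assume "a \<in> carrier (tr f T)"
  then obtain x where x: "x \<in> carrier T" "a = f x" by (auto simp: tr_carrier)
  have "f (inv x) \<in> carrier (tr f T)" using x by (simp add: tr_carrier)
  moreover have "f (inv x) \<otimes>\<^bsub>tr f T\<^esub> a = \<one>\<^bsub>tr f T\<^esub>" using x by (simp add: tr_mult tr_one)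
  ultimately show "\<exists>b\<in>carrier (tr f T). b \<otimes>\<^bsub>tr f T\<^esub> a = \<one>\<^bsub>tr f T\<^esub>" by blast
qed

lemma tr_inv: "x \<in> carrier T \<Longrightarrow> inv\<^bsub>tr f T\<^esub> (f x) = f (inv x)"
proof -
  assume x: "x \<in> carrier T"
  interpret TR: group "tr f T" using tr_group .
  have "f (inv x) \<otimes>\<^bsub>tr f T\<^esub> f x = \<one>\<^bsub>tr f T\<^esub>" using x by (simp add: tr_mult tr_one)
  then show ?thesis using TR.inv_equality x by (simp add: tr_carrier)
qed

lemma tr_stem:
  assumes st: "stem_extension T G pi"
  shows "stem_extension (tr f T) G (pi \<circ> g)"
    and "kernel (tr f T) G (pi \<circ> g) = f ` kernel T G pi"
proof -
  interpret TR: group "tr f T" using tr_group .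
  have hom: "pi \<in> hom T G" and surj: "pi ` carrier T = carrier G"
    and kc: "kernel T G pi \<subseteq> group_center T" and kd: "kernel T G pi \<subseteq> derived T (carrier T)"
    using st by (auto simp: stem_extension_def epi_def)
  show ker: "kernel (tr f T) G (pi \<circ> g) = f ` kernel T G pi"
    by (auto simp: kernel_def tr_carrier)
  have "pi \<circ> g \<in> hom (tr f T) G"
  proof (rule homI)
    fix a assume "a \<in> carrier (tr f T)" then show "(pi \<circ> g) a \<in> carrier G"
      using hom by (auto simp: tr_carrier hom_def)
  next
    fix a b assume "a \<in> carrier (tr f T)" "b \<in> carrier (tr f T)"
    then show "(pi \<circ> g) (a \<otimes>\<^bsub>tr f T\<^esub> b) = (pi \<circ> g) a \<otimes>\<^bsub>G\<^esub> (pi \<circ> g) b"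
      using hom by (auto simp: tr_carrier tr_mult hom_def)
  qed
  moreover have "(pi \<circ> g) ` carrier (tr f T) = carrier G"
  proof -
    have "(pi \<circ> g) ` carrier (tr f T) = (\<lambda>x. pi (g (f x))) ` carrier T" by (simp add: tr_carrier image_image)
    also have "\<dots> = pi ` carrier T" by (rule image_cong) auto
    finally show ?thesis using surj by simp
  qed
  moreover have "kernel (tr f T) G (pi \<circ> g) \<subseteq> group_center (tr f T)"
  proof
    fix a assume "a \<in> kernel (tr f T) G (pi \<circ> g)"
    then obtain k where k: "k \<in> kernel T G pi" "a = f k" using ker by auto
    have kz: "k \<in> group_center T" using k kc by blast
    show "a \<in> group_center (tr f T)" unfolding group_center_def
    proof (intro CollectI conjI ballI)
      show "a \<in> carrier (tr f T)" using k by (auto simp: tr_carrier kernel_def)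
      fix b assume "b \<in> carrier (tr f T)"
      then obtain y where y: "y \<in> carrier T" "b = f y" by (auto simp: tr_carrier)
      show "a \<otimes>\<^bsub>tr f T\<^esub> b = b \<otimes>\<^bsub>tr f T\<^esub> a"
        using kz y k by (auto simp: group_center_def tr_mult)
    qed
  qed
  moreover have "kernel (tr f T) G (pi \<circ> g) \<subseteq> derived (tr f T) (carrier (tr f T))"
  proof -
    have "x \<in> carrier T \<and> f x \<in> derived (tr f T) (carrier (tr f T))" if "x \<in> derived T (carrier T)" for x
      using that unfolding derived_def
    proof (induction rule: generate.induct)
      case one
      then show ?case using generate.one[of "tr f T"] by (simp add: tr_one)
    next
      case (incl h)
      then obtain a b where ab: "a \<in> carrier T" "b \<in> carrier T" "h = a \<otimes> b \<otimes> inv a \<otimes> inv b" by blast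
      have "f h = f a \<otimes>\<^bsub>tr f T\<^esub> f b \<otimes>\<^bsub>tr f T\<^esub> inv\<^bsub>tr f T\<^esub> (f a) \<otimes>\<^bsub>tr f T\<^esub> inv\<^bsub>tr f T\<^esub> (f b)"
        using ab by (simp add: tr_inv tr_mult)
      moreover have "f a \<in> carrier (tr f T)" "f b \<in> carrier (tr f T)" using ab by (auto simp: tr_carrier)
      ultimately have "f h \<in> derived_set (tr f T) (carrier (tr f T))" by blast
      then have "f h \<in> generate (tr f T) (derived_set (tr f T) (carrier (tr f T)))" by (rule generate.incl)
      moreover have "h \<in> carrier T" using ab by simp
      ultimately show ?case by blast
    next
      case (inv h)
      then obtain a b where ab: "a \<in> carrier T" "b \<in> carrier T" "h = a \<otimes> b \<otimes> inv a \<otimes> inv b" by blast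
      have hc: "h \<in> carrier T" using ab by simp
      have "f h = f a \<otimes>\<^bsub>tr f T\<^esub> f b \<otimes>\<^bsub>tr f T\<^esub> inv\<^bsub>tr f T\<^esub> (f a) \<otimes>\<^bsub>tr f T\<^esub> inv\<^bsub>tr f T\<^esub> (f b)"
        using ab by (simp add: tr_inv tr_mult)
      moreover have "f a \<in> carrier (tr f T)" "f b \<in> carrier (tr f T)" using ab by (auto simp: tr_carrier)
      ultimately have "f h \<in> derived_set (tr f T) (carrier (tr f T))" by blast
      then have "inv\<^bsub>tr f T\<^esub> (f h) \<in> generate (tr f T) (derived_set (tr f T) (carrier (tr f T)))"
        by (rule generate.inv)
      then show ?case using hc by (simp add: tr_inv)
    next
      case (eng h1 h2)
      have c: "h1 \<in> carrier T" "h2 \<in> carrier T" using eng.IH by auto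
      have "f h1 \<otimes>\<^bsub>tr f T\<^esub> f h2 \<in> generate (tr f T) (derived_set (tr f T) (carrier (tr f T)))"
        using eng.IH by (intro generate.eng) auto
      then show ?case using c by (simp add: tr_mult)
    qed
    then show ?thesis using ker kd by auto
  qed
  ultimately show "stem_extension (tr f T) G (pi \<circ> g)"
    using tr_group by (simp add: stem_extension_def epi_def)
qed

lemma tr_comm:
  assumes "a \<in> carrier (tr f T)" "b \<in> carrier (tr f T)" "a \<otimes>\<^bsub>tr f T\<^esub> b = b \<otimes>\<^bsub>tr f T\<^esub> a"
  shows "g a \<otimes> g b = g b \<otimes> g a"
proof -
  obtain x y where xy: "x \<in> carrier T" "y \<in> carrier T" "a = f x" "b = f y" using assms by (auto simp: tr_carrier)
  have "f (x \<otimes> y) = f (y \<otimes> x)" using assms xy by (simp add: tr_mult)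
  then have "x \<otimes> y = y \<otimes> x" using inj xy by (simp add: inj_on_eq_iff)
  then show ?thesis using xy by simp
qed

end




locale fin =
  fixes N :: int
  assumes N1: "N > 1" and oddN: "odd N"
begin

abbreviation "G \<equiv> heisenberg N"
abbreviation "C \<equiv> cov N"
abbreviation "T0 \<equiv> tr to_nat C"
abbreviation "p0 \<equiv> pi0 \<circ> inv_into (carrier C) to_nat"

sublocale tg: trans_grp C to_nat
  using cov_group[OF N1] by (simp add: trans_grp_def trans_grp_axioms_def inj_on_def)

lemma GG: "group G" using heis_group[OF N1] .

lemma T0_stem: "stem_extension T0 G p0"
  using tg.tr_stem(1)[OF cov_stem[OF N1 oddN]] .

lemma T0_card: "card (kernel T0 G p0) = nat N * nat N"
proof -
  have "card (kernel T0 G p0) = card (to_nat ` kernel C G pi0)"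
    using tg.tr_stem(2)[OF cov_stem[OF N1 oddN]] by simp
  also have "\<dots> = card (kernel C G pi0)"
    by (rule card_image) (simp add: inj_on_def)
  finally show ?thesis using cov_card_kernel by simp
qed

lemma T0_schur: "schur_cover T0 G p0"
  unfolding schur_cover_def
proof (intro conjI allI impI)
  show "stem_extension T0 G p0" using T0_stem .
  show "finite (carrier T0)" using cov_finite by (simp add: tg.tr_carrier)
  fix S :: "nat monoid" and \<sigma>
  assume "stem_extension S G \<sigma> \<and> finite (carrier S)"
  then have "heis_stem S \<sigma> N" using heis_stemI N1 by blast
  then have "card (kernel S G \<sigma>) \<le> nat N * nat N" by (rule heis_stem.card_kernel_bound)
  then show "card (kernel S G \<sigma>) \<le> card (kernel T0 G p0)" using T0_card by simp
qed

lemma T0_hs: "heis_stem T0 p0 N" using heis_stemI[OF T0_stem N1] .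

lemma schur_hs: "schur_cover T G \<pi> \<Longrightarrow> heis_stem T \<pi> N"
  using heis_stemI N1 by (auto simp: schur_cover_def)

lemma deep_adj_sym: "deep_adj G x y \<Longrightarrow> deep_adj G y x"
  unfolding deep_adj_def by metis

lemma e_dominant:
  assumes y: "y \<in> carrier G" "y \<noteq> (0,0,0)"
  shows "deep_adj G (0,0,0) y"
  unfolding deep_adj_def
proof (intro conjI allI impI ballI)
  show "(0,0,0) \<in> carrier G" using N1 by (simp add: heis_simps)
  show "y \<in> carrier G" using y by simp
  show "(0,0,0) \<noteq> y" using y by simp
  fix T :: "nat monoid" and \<pi> a b
  assume sc: "schur_cover T G \<pi>" and a: "a \<in> carrier T" and b: "b \<in> carrier T"
    and ab: "\<pi> a = (0,0,0) \<and> \<pi> b = y"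
  interpret hs: heis_stem T \<pi> N using schur_hs[OF sc] .
  have "a \<in> hs.K" using a ab by (simp add: hs.K_iff)
  then show "a \<otimes>\<^bsub>T\<^esub> b = b \<otimes>\<^bsub>T\<^esub> a" using hs.K_comm b by blast
qed

lemma noncomm_not_adj:
  assumes x: "x \<in> carrier G" and y: "y \<in> carrier G"
    and nc: "x \<otimes>\<^bsub>G\<^esub> y \<noteq> y \<otimes>\<^bsub>G\<^esub> x"
  shows "\<not> deep_adj G x y"
proof
  assume adj: "deep_adj G x y"
  interpret hs: heis_stem T0 p0 N using T0_hs .
  obtain a where a: "a \<in> carrier T0" "p0 a = x" using hs.lift_exists[OF x] by blast
  obtain b where b: "b \<in> carrier T0" "p0 b = y" using hs.lift_exists[OF y] by blast
  have "a \<otimes>\<^bsub>T0\<^esub> b = b \<otimes>\<^bsub>T0\<^esub> a" using adj T0_schur a b unfolding deep_adj_def by blast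
  then have "x \<otimes>\<^bsub>G\<^esub> y = y \<otimes>\<^bsub>G\<^esub> x" using hs.lifts_commute_images a b by metis
  then show False using nc by simp
qed

lemma adj_cen:
  assumes y: "y \<in> carrier G" and ye: "y = (a, b, c)" and ne: "(0, 0, int M mod N) \<noteq> y"
    and ma: "(int M * a) mod N = 0" and mb: "(int M * b) mod N = 0"
  shows "deep_adj G (0, 0, int M mod N) y"
  unfolding deep_adj_def
proof (intro conjI allI impI ballI)
  show "(0, 0, int M mod N) \<in> carrier G" using N1 by (simp add: heis_simps)
  show "y \<in> carrier G" using y .
  show "(0, 0, int M mod N) \<noteq> y" using ne .
  fix T :: "nat monoid" and \<pi> h g
  assume sc: "schur_cover T G \<pi>" and h: "h \<in> carrier T" and g: "g \<in> carrier T"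
    and hg: "\<pi> h = (0, 0, int M mod N) \<and> \<pi> g = y"
  interpret hs: heis_stem T \<pi> N using schur_hs[OF sc] .
  show "h \<otimes>\<^bsub>T\<^esub> g = g \<otimes>\<^bsub>T\<^esub> h"
    using hs.adj_general[OF h g _ _ ma mb] hg ye by blast
qed

lemma adj_power:
  assumes x: "x \<in> carrier G" and ne: "x \<noteq> x [^]\<^bsub>G\<^esub> (n::nat)"
  shows "deep_adj G x (x [^]\<^bsub>G\<^esub> n)"
  unfolding deep_adj_def
proof (intro conjI allI impI ballI)
  show "x \<in> carrier G" using x .
  show "x [^]\<^bsub>G\<^esub> n \<in> carrier G" using x monoid.nat_pow_closed[OF group.is_monoid[OF GG]] by blast
  show "x \<noteq> x [^]\<^bsub>G\<^esub> n" using ne .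
  fix T :: "nat monoid" and \<pi> a b
  assume sc: "schur_cover T G \<pi>" and a: "a \<in> carrier T" and b: "b \<in> carrier T"
    and ab: "\<pi> a = x \<and> \<pi> b = x [^]\<^bsub>G\<^esub> n"
  interpret hs: heis_stem T \<pi> N using schur_hs[OF sc] .
  show "a \<otimes>\<^bsub>T\<^esub> b = b \<otimes>\<^bsub>T\<^esub> a" using hs.adj_pow[OF a b] ab by simp
qed

lemma adj_central_cond:
  assumes adj: "deep_adj G (0,0,c) (a', b', c')"
  shows "(2 * c * a') mod N = 0 \<and> (2 * c * b') mod N = 0"
proof -
  have cc: "(0,0,c) \<in> carrier G" and yc: "(a',b',c') \<in> carrier G" using adj by (auto simp: deep_adj_def)
  have g1: "(0,0,c,0,0) \<in> carrier C" and g2: "(a',b',c',0,0) \<in> carrier C"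
    using cc yc N1 by (auto simp: cov_simps heis_simps)
  have l1: "to_nat (0::int,0::int,c,0::int,0::int) \<in> carrier T0" and l2: "to_nat (a',b',c',0::int,0::int) \<in> carrier T0"
    using g1 g2 by (auto simp: tg.tr_carrier)
  have p1: "p0 (to_nat (0::int,0::int,c,0::int,0::int)) = (0,0,c)" using g1 by (simp add: pi0_def)
  have p2: "p0 (to_nat (a',b',c',0::int,0::int)) = (a',b',c')" using g2 by (simp add: pi0_def)
  have "to_nat (0::int,0::int,c,0::int,0::int) \<otimes>\<^bsub>T0\<^esub> to_nat (a',b',c',0::int,0::int)
      = to_nat (a',b',c',0::int,0::int) \<otimes>\<^bsub>T0\<^esub> to_nat (0::int,0::int,c,0::int,0::int)"
    using adj T0_schur l1 l2 p1 p2 unfolding deep_adj_def by blast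
  then have "(0,0,c,0,0) \<otimes>\<^bsub>C\<^esub> (a',b',c',0,0) = (a',b',c',0,0) \<otimes>\<^bsub>C\<^esub> (0,0,c,0,0)"
    using tg.tr_comm[OF l1 l2] g1 g2 by simp
  then show ?thesis by (rule cov_comm_central)
qed

end


lemma small_dvd: "0 \<le> (a::int) \<Longrightarrow> a < n \<Longrightarrow> n dvd a \<Longrightarrow> a = 0"
  using zdvd_imp_le by fastforce

lemma rtranclp_sym:
  assumes sym: "\<And>u v. r u v \<Longrightarrow> r v u" and rt: "r\<^sup>*\<^sup>* x y"
  shows "r\<^sup>*\<^sup>* y x"
  using rt
proof (induction rule: rtranclp_induct)
  case base then show ?case by simp
next
  case (step y z)
  then show ?case using sym converse_rtranclp_into_rtranclp by metis
qed

locale fin2 = fin +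
  fixes p k :: nat
  assumes pp: "prime p" and po: "odd p" and k1: "k \<ge> 1" and Ndef: "N = int p ^ k"
begin

abbreviation "R \<equiv> reduced_vertices (carrier G) (deep_adj G)"
abbreviation "Er \<equiv> (\<lambda>u v. u \<in> R \<and> v \<in> R \<and> deep_adj G u v)"

lemma p3: "p \<ge> 3"
proof -
  have "p \<ge> 2" using pp prime_ge_2_nat by blast
  moreover have "p \<noteq> 2" using po by auto
  ultimately show ?thesis by simp
qed

lemma R_iff: "x \<in> R \<longleftrightarrow> x \<in> carrier G \<and> (\<exists>w\<in>carrier G. w \<noteq> x \<and> \<not> deep_adj G x w)"
  by (auto simp: reduced_vertices_def dominant_vertices_def)

lemma zero_notR: "(0,0,0) \<notin> R"
  using e_dominant by (auto simp: R_iff)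

lemma e12: "(1,0,0) \<in> carrier G" "(0,1,0) \<in> carrier G" using N1 by (auto simp: heis_simps)

lemma noncomm_R:
  assumes x: "x \<in> carrier G" and w: "w \<in> carrier G" and nc: "x \<otimes>\<^bsub>G\<^esub> w \<noteq> w \<otimes>\<^bsub>G\<^esub> x"
  shows "x \<in> R"
proof -
  have "w \<noteq> x" using nc by auto
  then show ?thesis using noncomm_not_adj[OF x w nc] x w by (auto simp: R_iff)
qed

lemma e1R: "(1,0,0) \<in> R"
  using noncomm_R[OF e12(1) e12(2)] N1 by (simp add: heis_simps)

lemma Er_sym: "Er u v \<Longrightarrow> Er v u" using deep_adj_sym by blast

lemma disconnected:
  assumes kk: "k = 1"
  shows "\<not> graph_connected R (deep_adj G)"
proof
  assume conn: "graph_connected R (deep_adj G)"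
  have Np: "N = int p" using Ndef kk by simp
  have N3: "N \<ge> 3" using p3 Np by simp
  have zc: "(0,0,1) \<in> carrier G" using N1 by (simp add: heis_simps)
  have "\<not> deep_adj G (0,0,1) (1,0,0)"
  proof
    assume "deep_adj G (0,0,1) (1,0,0)"
    then have "(2 * 1 * 1) mod N = 0" using adj_central_cond by blast
    then show False using N3 by simp
  qed
  moreover have "(1::int,0::int,0::int) \<noteq> (0,0,1)" by simp
  ultimately have zR: "(0,0,1) \<in> R" using zc e12(1) unfolding R_iff by blast
  have path: "Er\<^sup>*\<^sup>* (0,0,1) (1,0,0)" using conn zR e1R by (auto simp: graph_connected_def)
  have inv: "fst v = 0 \<and> fst (snd v) = 0 \<and> v \<in> R" if "Er\<^sup>*\<^sup>* (0,0,1) v" for v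
    using that
  proof (induction rule: rtranclp_induct)
    case base then show ?case using zR by simp
  next
    case (step u v)
    obtain c where ue: "u = (0,0,c)" using step.IH by (metis prod.collapse)
    obtain a' b' c' where ve: "v = (a',b',c')" by (metis prod.collapse)
    have uc: "u \<in> carrier G" and vc: "v \<in> carrier G" using step.hyps by (auto simp: R_iff)
    have c0: "c \<noteq> 0" using zero_notR step.IH ue by auto
    have cr: "0 < c" "c < N" using uc ue c0 by (auto simp: heis_simps)
    have vr: "0 \<le> a'" "a' < N" "0 \<le> b'" "b' < N" using vc ve by (auto simp: heis_simps)
    have cond: "(2 * c * a') mod N = 0 \<and> (2 * c * b') mod N = 0"
      using adj_central_cond step.hyps(2) ue ve by blast
    have ip: "prime (int p)" using pp by simp
    have n2: "\<not> int p dvd 2" using p3 zdvd_imp_le[of "int p" 2] by auto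
    have nc: "\<not> int p dvd c" using cr Np zdvd_imp_le[of "int p" c] by auto
    have "int p dvd 2 * c * a'" using cond Np by (simp add: dvd_eq_mod_eq_0)
    then have "int p dvd a'" using ip n2 nc by (simp add: prime_dvd_mult_iff)
    then have a0: "a' = 0" using small_dvd vr Np by blast
    have "int p dvd 2 * c * b'" using cond Np by (simp add: dvd_eq_mod_eq_0)
    then have "int p dvd b'" using ip n2 nc by (simp add: prime_dvd_mult_iff)
    then have b0: "b' = 0" using small_dvd vr Np by blast
    show ?case using a0 b0 ve step.hyps by simp
  qed
  show False using inv[OF path] by simp
qed


lemma connected:
  assumes kk: "k \<ge> 2"
  shows "graph_connected R (deep_adj G)"
proof -
  define Mn where "Mn = p ^ (k - 1)"
  obtain k' where k': "k = Suc k'" using kk by (cases k) auto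
  have NM: "N = int p * int Mn" using Ndef by (simp add: Mn_def k')
  have Mpos: "int Mn > 0" using p3 by (simp add: Mn_def)
  have pM: "int p dvd int Mn" using kk k' by (cases k') (auto simp: Mn_def)
  have MN: "int Mn < N" using NM Mpos p3 by simp
  have Mmod: "int Mn mod N = int Mn" using Mpos MN by simp
  define z where "z = (0::int, 0::int, int Mn mod N)"
  have zc: "z \<in> carrier G" using N1 by (simp add: z_def heis_simps)
  have "\<not> deep_adj G z (1,0,0)"
  proof
    assume "deep_adj G z (1,0,0)"
    then have "(2 * (int Mn mod N) * 1) mod N = 0" using adj_central_cond unfolding z_def by blast
    moreover have "2 * int Mn < N"
    proof -
      have "3 * int Mn \<le> int p * int Mn" using p3 Mpos by (intro mult_right_mono) auto
      then show ?thesis using NM Mpos by linarith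
    qed
    ultimately show False using Mmod Mpos by simp
  qed
  moreover have "(1::int,0::int,0::int) \<noteq> z" by (simp add: z_def)
  ultimately have zR: "z \<in> R" using zc e12(1) unfolding R_iff by blast
  have cen_adj: "deep_adj G x z" if x: "x \<in> carrier G" "x \<noteq> z" and xe: "x = (a,b,c)"
    and pa: "(int Mn * a) mod N = 0" and pb: "(int Mn * b) mod N = 0" for x a b c
    using deep_adj_sym[OF adj_cen[OF x(1) xe _ pa pb]] x(2) by (simp add: z_def)
  have toz: "Er\<^sup>*\<^sup>* x z" if xR: "x \<in> R" for x
  proof -
    obtain a b c where xe: "x = (a,b,c)" by (metis prod.collapse)
    have xc: "x \<in> carrier G" using xR by (simp add: R_iff)
    have r: "0 \<le> a" "a < N" "0 \<le> b" "b < N" using xc xe by (auto simp: heis_simps)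
    show ?thesis
    proof (cases "int p dvd a \<and> int p dvd b")
      case True
      then obtain ta tb where ta: "a = int p * ta" and tb: "b = int p * tb" by (auto simp: dvd_def)
      have pa: "(int Mn * a) mod N = 0" using NM ta by (simp add: ac_simps)
      have pb: "(int Mn * b) mod N = 0" using NM tb by (simp add: ac_simps)
      show ?thesis
      proof (cases "x = z")
        case True then show ?thesis by simp
      next
        case False
        then have "Er x z" using cen_adj[OF xc False xe pa pb] xR zR by simp
        then show ?thesis by (rule r_into_rtranclp)
      qed
    next
      case False
      define y where "y = x [^]\<^bsub>G\<^esub> p"
      have yc: "y \<in> carrier G" using xc monoid.nat_pow_closed[OF group.is_monoid[OF GG]] by (simp add: y_def)
      have y12: "fst y = (int p * a) mod N" "fst (snd y) = (int p * b) mod N"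
        using heis_pow12[OF N1 xc, of p] xe by (simp_all add: y_def)
      have nz: "(int p * a) mod N \<noteq> 0 \<or> (int p * b) mod N \<noteq> 0"
      proof (rule ccontr)
        assume "\<not> ?thesis"
        then have "N dvd int p * a" "N dvd int p * b" by (auto simp: dvd_eq_mod_eq_0)
        moreover have "int p \<noteq> 0" using p3 by simp
        ultimately have "int Mn dvd a" "int Mn dvd b" using NM by (simp_all add: dvd_times_left_cancel_iff)
        then have "int p dvd a" "int p dvd b" using pM dvd_trans by blast+
        then show False using False by simp
      qed
      obtain ya yb yc' where ye: "y = (ya, yb, yc')" by (metis prod.collapse)
      have yR: "y \<in> R"
      proof (cases "(int p * a) mod N \<noteq> 0")
        case True
        have "y \<otimes>\<^bsub>G\<^esub> (0,1,0) \<noteq> (0,1,0) \<otimes>\<^bsub>G\<^esub> y"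
          using heis_noncomm2[OF N1, of ya yb yc'] yc ye y12 True by auto
        then show ?thesis using noncomm_R[OF yc e12(2)] by simp
      next
        case False
        then have nb: "(int p * b) mod N \<noteq> 0" using nz by simp
        have "y \<otimes>\<^bsub>G\<^esub> (1,0,0) \<noteq> (1,0,0) \<otimes>\<^bsub>G\<^esub> y"
          using heis_noncomm1[OF N1, of ya yb yc'] yc ye y12 nb by auto
        then show ?thesis using noncomm_R[OF yc e12(1)] by simp
      qed
      have xy: "Er\<^sup>*\<^sup>* x y"
      proof (cases "x = y")
        case True then show ?thesis by simp
      next
        case False
        then have "Er x y" using adj_power[OF xc, of p] xR yR by (simp add: y_def)
        then show ?thesis by (rule r_into_rtranclp)
      qed
      have yz_ne: "y \<noteq> z" using nz y12 by (auto simp: z_def)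
      have pa: "(int Mn * ya) mod N = 0"
      proof -
        have "(int Mn * ya) mod N = (int Mn * (int p * a)) mod N" using y12 ye by (simp add: mod_mult_right_eq)
        also have "\<dots> = (N * a) mod N" using NM by (simp add: ac_simps)
        finally show ?thesis by simp
      qed
      have pb: "(int Mn * yb) mod N = 0"
      proof -
        have "(int Mn * yb) mod N = (int Mn * (int p * b)) mod N" using y12 ye by (simp add: mod_mult_right_eq)
        also have "\<dots> = (N * b) mod N" using NM by (simp add: ac_simps)
        finally show ?thesis by simp
      qed
      have eyz: "Er y z" using cen_adj[OF yc yz_ne ye pa pb] yR zR by simp
      show ?thesis by (rule rtranclp.rtrancl_into_rtrancl[OF xy eyz])
    qed
  qed
  show ?thesis unfolding graph_connected_def
  proof (intro conjI ballI)
    show "R \<noteq> {}" using zR by blast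
    fix x y assume xR: "x \<in> R" and yR: "y \<in> R"
    have "Er\<^sup>*\<^sup>* z y"
      by (rule rtranclp_sym[where r = Er, OF _ toz[OF yR]]) (rule Er_sym)
    then have "Er\<^sup>*\<^sup>* x z" "Er\<^sup>*\<^sup>* z y" using toz[OF xR] by auto
    then show "Er\<^sup>*\<^sup>* x y" by (rule rtranclp_trans)
  qed
qed

end



theorem proposition5p6:
  fixes p k :: nat
  assumes "prime p" and "odd p" and "k \<ge> 1"
  shows "(\<not> graph_connected
            (reduced_vertices (carrier (heisenberg (int p ^ k))) (deep_adj (heisenberg (int p ^ k))))
            (deep_adj (heisenberg (int p ^ k))))
         \<longleftrightarrow> k = 1"
proof -
  have p2: "p \<ge> 2" using assms(1) prime_ge_2_nat by blast
  have ip2: "int p \<ge> 2" using p2 by simp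
  have "int p ^ 1 \<le> int p ^ k" by (rule power_increasing) (use ip2 assms(3) in auto)
  then have "int p \<le> int p ^ k" by simp
  then have N1: "int p ^ k > 1" using ip2 by linarith
  have oddN: "odd (int p ^ k)" using assms(2) by simp
  interpret f2: fin2 "int p ^ k" p k
    by (unfold_locales) (use N1 oddN assms in auto)
  show ?thesis
  proof (cases "k = 1")
    case True
    then show ?thesis using f2.disconnected by simp
  next
    case False
    then have "k \<ge> 2" using assms(3) by simp
    then show ?thesis using f2.connected False by simp
  qed
qed

end
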